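(* Let $(V_\iota)_{\iota\in\mathbb N}$ be a sequence of bounded $C^1$-submanifolds of $\mathbb R^n$ of dimension $p$, each $\eta$-bounded for a fixed $\eta>0$. Assume that both $\lim_\iota V_\iota$ and $\lim_\iota\operatorname{fr}V_\iota$ exist, and that there is $\nu\in\mathbb N$ such that for every $\iota$ and every open box $U\subseteq\mathbb R^n$ the set $V_\iota\cap U$ has at most $\nu$ connected components. Then for every $x\in\lim_\iota V_\iota\setminus\lim_\iota\operatorname{fr}V_\iota$ there are a box $U\subseteq\mathbb R^n$ containing $x$ and $p\eta$-Lipschitz functions $f_1,\dots,f_\nu:\Pi_p(U)\to\mathbb R^{n-p}$ such that $\big(\lim_\iota V_\iota\big)\cap U=(\operatorname{gr}f_1\cap U)\cup\cdots\cup(\operatorname{gr}f_\nu\cap U)$.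
   Context: For $x\in\mathbb R^k$, $|x|=\max_i|x_i|$, used for Lipschitz constants. A box is a product of nonempty open intervals. A $p$-dimensional submanifold $V\subseteq\mathbb R^n$ is $\eta$-bounded if for every $x\in V$ there is a real $(n-p)\times p$ matrix $L$ with all entries of absolute value $\le\eta$ such that $T_xV=\{(u,Lu):u\in\mathbb R^p\}$. $\operatorname{fr}V=\operatorname{cl}V\setminus V$. For bounded sets $A_\iota\subseteq\mathbb R^n$, $\lim_\iota A_\iota=C$ means the closures $\operatorname{cl}A_\iota$ converge to the compact set $C$ in the Hausdorff metric on compact subsets of $\mathbb R^n$ (with $\emptyset$ included, at distance $\infty$ from nonempty sets). $\Pi_p$ is projection onto the first $p$ coordinates and $\operatorname{gr}f$ the graph of $f$. *)

theory Defs
  imports "HOL-Analysis.Analysis"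
begin

text \<open>R^n is modelled as (real,'n) vec for a finite linearly ordered index type 'n
  (so n = CARD('n)); the "first p coordinates" are the p smallest indices.
  R^p and R^(n-p) are modelled as the coordinate subspaces of (real,'n) vec.\<close>

definition firstp :: "nat \<Rightarrow> ('n::{finite,linorder}) set" where
  "firstp p = {i. card {j. j < i} < p}"

definition projp :: "nat \<Rightarrow> (real,'n) vec \<Rightarrow> (real,'n::{finite,linorder}) vec" where
  "projp p x = (\<chi> i. if i \<in> firstp p then x$i else 0)"

definition maxnorm :: "(real,'n::finite) vec \<Rightarrow> real" where
  "maxnorm x = Max (range (\<lambda>i. \<bar>x$i\<bar>))"

definition C1_on :: "((real,'n::finite) vec) set \<Rightarrow> ((real,'n) vec \<Rightarrow> (real,'n) vec) \<Rightarrow> bool" where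
  "C1_on W f \<longleftrightarrow> (\<exists>f'. (\<forall>y\<in>W. (f has_derivative f' y) (at y))
                         \<and> continuous_on W (\<lambda>y. matrix (f' y)))"

definition C1_submanifold :: "nat \<Rightarrow> ((real,'n::{finite,linorder}) vec) set \<Rightarrow> bool" where
  "C1_submanifold p V \<longleftrightarrow>
     (\<forall>x\<in>V. \<exists>W \<Phi> \<Psi>. open W \<and> x \<in> W \<and> inj_on \<Phi> W \<and> open (\<Phi> ` W)
        \<and> C1_on W \<Phi> \<and> C1_on (\<Phi> ` W) \<Psi> \<and> (\<forall>y\<in>W. \<Psi> (\<Phi> y) = y)
        \<and> \<Phi> ` (V \<inter> W) = \<Phi> ` W \<inter> {z. \<forall>j. j \<notin> firstp p \<longrightarrow> z$j = 0})"

definition tangent_space :: "((real,'n::finite) vec) set \<Rightarrow> (real,'n) vec \<Rightarrow> ((real,'n) vec) set" where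
  "tangent_space V x = {v. \<exists>\<gamma> e. e > 0 \<and> (\<forall>t\<in>{-e<..<e}. \<gamma> t \<in> V) \<and> \<gamma> 0 = x
                         \<and> (\<gamma> has_vector_derivative v) (at 0)}"

definition eta_bounded :: "nat \<Rightarrow> real \<Rightarrow> ((real,'n::{finite,linorder}) vec) set \<Rightarrow> bool" where
  "eta_bounded p \<eta> V \<longleftrightarrow>
     (\<forall>x\<in>V. \<exists>L :: 'n \<Rightarrow> 'n \<Rightarrow> real.
        (\<forall>j i. j \<notin> firstp p \<longrightarrow> i \<in> firstp p \<longrightarrow> \<bar>L j i\<bar> \<le> \<eta>) \<and>
        tangent_space V x = {v. \<forall>j. j \<notin> firstp p \<longrightarrow> v$j = (\<Sum>i\<in>firstp p. L j i * v$i)})"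

definition fr :: "('a::topological_space) set \<Rightarrow> 'a set" where
  "fr V = closure V - V"

definition hdist :: "('a::metric_space) set \<Rightarrow> 'a set \<Rightarrow> real" where
  "hdist A B = max (SUP a\<in>A. infdist a B) (SUP b\<in>B. infdist b A)"

text \<open>lim A = C: closures converge to compact C in the Hausdorff metric, where the
  empty set is at distance infinity from nonempty sets.\<close>
definition hlim :: "(nat \<Rightarrow> ('a::metric_space) set) \<Rightarrow> 'a set \<Rightarrow> bool" where
  "hlim A C \<longleftrightarrow> (\<forall>i. bounded (A i)) \<and> compact C \<and>
     ((C = {} \<and> (\<forall>\<^sub>F i in sequentially. A i = {})) \<or>
      (C \<noteq> {} \<and> (\<forall>\<^sub>F i in sequentially. A i \<noteq> {}) \<and>
        (\<lambda>i. hdist (closure (A i)) C) \<longlonglongrightarrow> 0))"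

definition lip_map :: "nat \<Rightarrow> real \<Rightarrow> ((real,'n::{finite,linorder}) vec) set \<Rightarrow> ((real,'n) vec \<Rightarrow> (real,'n) vec) \<Rightarrow> bool" where
  "lip_map p K D f \<longleftrightarrow> (\<forall>u\<in>D. \<forall>i\<in>firstp p. f u $ i = 0) \<and>
     (\<forall>u\<in>D. \<forall>v\<in>D. maxnorm (f u - f v) \<le> K * maxnorm (u - v))"

text \<open>gr f = {(u, f u) : u \<in> D}.\<close>
definition graph :: "((real,'n::finite) vec) set \<Rightarrow> ((real,'n) vec \<Rightarrow> (real,'n) vec) \<Rightarrow> ((real,'n) vec) set" where
  "graph D f = {u + f u | u. u \<in> D}"

end

theory Submission
  imports Defs "HOL-Complex_Analysis.Great_Picard"
begin

lemma infnorm_Max_cart: "infnorm (x::real^'n) = Max (range (\<lambda>i. \<bar>x$i\<bar>))"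
proof -
  have "{\<bar>x$i\<bar> |i. i\<in>UNIV} = range (\<lambda>i. \<bar>x$i\<bar>)" by auto
  then show ?thesis unfolding infnorm_cart
    by (simp add: cSup_eq_Max)
qed

lemma maxnorm_infnorm: "maxnorm x = infnorm x"
  unfolding maxnorm_def infnorm_Max_cart ..

lemma infnorm_le_cart: "(\<And>i. \<bar>(x::real^'n)$i\<bar> \<le> c) \<Longrightarrow> infnorm x \<le> c"
  unfolding infnorm_Max_cart by (simp)

lemma infnorm_less_cart: "(\<And>i. \<bar>(x::real^'n)$i\<bar> < c) \<Longrightarrow> infnorm x < c"
  unfolding infnorm_Max_cart by (simp)

lemma infnorm_less_cart_iff: "infnorm (x::real^'n) < c \<longleftrightarrow> (\<forall>i. \<bar>x$i\<bar> < c)"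
  unfolding infnorm_Max_cart by (simp)

lemma infnorm_le_cart_iff: "infnorm (x::real^'n) \<le> c \<longleftrightarrow> (\<forall>i. \<bar>x$i\<bar> \<le> c)"
  unfolding infnorm_Max_cart by (simp)

lemma card_firstp: "card (firstp p :: ('n::{finite,linorder}) set) \<le> p"
proof -
  let ?f = "\<lambda>i::'n. card {j. j < i}"
  have "inj ?f"
  proof (rule injI)
    fix a b :: 'n assume e: "?f a = ?f b"
    show "a = b"
    proof (rule ccontr)
      assume "a \<noteq> b"
      then consider "a < b" | "b < a" by fastforce
      then show False
      proof cases
        case 1
        then have "{j. j < a} \<subset> {j. j < b}" by auto
        then have "card {j. j < a} < card {j. j < b}" by (simp add: psubset_card_mono)
        then show False using e by simp
      next
        case 2
        then have "{j. j < b} \<subset> {j. j < a}" by auto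
        then have "card {j. j < b} < card {j. j < a}" by (simp add: psubset_card_mono)
        then show False using e by simp
      qed
    qed
  qed
  then have "card (firstp p :: 'n set) = card (?f ` firstp p)"
    by (simp add: card_image inj_on_subset)
  also have "\<dots> \<le> card {..<p}"
    by (rule card_mono) (auto simp: firstp_def)
  finally show ?thesis by simp
qed

lemma projp_nth [simp]: "projp p x $ i = (if i \<in> firstp p then x$i else 0)"
  by (simp add: projp_def)

lemma linear_projp: "linear (projp p :: real^'n::{finite,linorder} \<Rightarrow> _)"
  by (rule linearI) (auto simp: vec_eq_iff)

lemma bounded_linear_projp: "bounded_linear (projp p :: real^'n::{finite,linorder} \<Rightarrow> _)"
  using linear_projp linear_conv_bounded_linear by blast

lemma projp_add: "projp p (x + y) = projp p x + projp p y"
  by (auto simp: vec_eq_iff)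
lemma projp_diff: "projp p (x - y) = projp p x - projp p y"
  by (auto simp: vec_eq_iff)
lemma projp_scaleR: "projp p (c *\<^sub>R x) = c *\<^sub>R projp p x"
  by (auto simp: vec_eq_iff)
lemma projp_projp [simp]: "projp p (projp p x) = projp p x"
  by (auto simp: vec_eq_iff)
lemma projp_0 [simp]: "projp p 0 = 0"
  by (auto simp: vec_eq_iff)
lemma projp_fib [simp]: "projp p (x - projp p x) = 0"
  by (auto simp: vec_eq_iff)

lemma infnorm_projp_le: "infnorm (projp p x) \<le> infnorm x"
  by (rule infnorm_le_cart) (auto simp: component_le_infnorm_cart infnorm_pos_le)
lemma infnorm_fib_le: "infnorm (x - projp p x) \<le> infnorm x"
  by (rule infnorm_le_cart) (auto simp: component_le_infnorm_cart infnorm_pos_le)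

lemma continuous_on_projp [continuous_intros]:
  "continuous_on S f \<Longrightarrow> continuous_on S (\<lambda>x. projp p (f x))"
  by (rule bounded_linear.continuous_on[OF bounded_linear_projp])

lemma infnorm_split_le:
  "infnorm (x::real^'n::{finite,linorder}) \<le> max (infnorm (projp p x)) (infnorm (x - projp p x))"
proof (rule infnorm_le_cart)
  fix i
  show "\<bar>x $ i\<bar> \<le> max (infnorm (projp p x)) (infnorm (x - projp p x))"
  proof (cases "i \<in> firstp p")
    case True
    then have "\<bar>x $ i\<bar> = \<bar>projp p x $ i\<bar>" by simp
    then show ?thesis using component_le_infnorm_cart[of "projp p x" i] by linarith
  next
    case False
    then have "\<bar>x $ i\<bar> = \<bar>(x - projp p x) $ i\<bar>" by simp
    then show ?thesis using component_le_infnorm_cart[of "x - projp p x" i] by linarith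
  qed
qed

lemma infnorm_split_less:
  "infnorm (projp p x) < c \<Longrightarrow> infnorm (x - projp p x) < c \<Longrightarrow> infnorm (x::real^'n::{finite,linorder}) < c"
  using infnorm_split_le[of x p] by linarith

lemma norm_le_sqrt_infnorm: "norm (x::real^'n) \<le> sqrt (real CARD('n)) * infnorm x"
  using norm_le_infnorm[of x] by simp

lemma tangentI:
  assumes "e > 0" "\<And>t. t \<in> {-e<..<e} \<Longrightarrow> \<gamma> t \<in> V" "(\<gamma> has_vector_derivative v) (at 0)"
  shows "v \<in> tangent_space V (\<gamma> 0)"
  unfolding tangent_space_def using assms by blast

lemma projp_has_vector_derivative:
  "(f has_vector_derivative v) F \<Longrightarrow> ((\<lambda>t. projp p (f t)) has_vector_derivative projp p v) F"
  using bounded_linear.has_vector_derivative[OF bounded_linear_projp] by blast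

lemma matrix_apply_continuous_on:
  fixes A :: "'a::topological_space \<Rightarrow> real^'n^'m"
  assumes "continuous_on S A"
  shows "continuous_on S (\<lambda>s. A s *v w)"
  unfolding matrix_vector_mult_def
  by (intro continuous_intros continuous_on_component assms)

lemma chart_graph:
  fixes V :: "(real^'n::{finite,linorder}) set"
  assumes man: "C1_submanifold p V" and eb: "eta_bounded p \<eta> V" and eta: "\<eta> \<ge> 0" and yV: "y \<in> V"
  obtains N Ob g where "open N" "y \<in> N" "open Ob" "projp p y \<in> Ob"
    "\<And>u. u \<in> Ob \<Longrightarrow> projp p u = u \<Longrightarrow> u + g u \<in> V"
    "\<And>u. projp p (g u) = 0"
    "\<And>v. v \<in> V \<Longrightarrow> v \<in> N \<Longrightarrow> projp p v \<in> Ob \<and> v = projp p v + g (projp p v)"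
    "\<And>u. u \<in> Ob \<Longrightarrow> projp p u = u \<Longrightarrow> \<exists>D. (g has_derivative D) (at u) \<and>
        (\<forall>h. projp p h = h \<longrightarrow> (\<forall>j. j \<notin> firstp p \<longrightarrow> \<bar>D h $ j\<bar> \<le> real p * \<eta> * infnorm h))"
proof -
  let ?E = "{z::real^('n::{finite,linorder}). \<forall>j. j \<notin> firstp p \<longrightarrow> z$j = 0}"
  have E_iff: "\<And>z. z \<in> ?E \<longleftrightarrow> projp p z = z" by (auto simp: vec_eq_iff)
  from man yV have "\<exists>W \<Phi> \<Psi>. open W \<and> y \<in> W \<and> inj_on \<Phi> W \<and> open (\<Phi> ` W)
        \<and> C1_on W \<Phi> \<and> C1_on (\<Phi> ` W) \<Psi> \<and> (\<forall>y\<in>W. \<Psi> (\<Phi> y) = y)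
        \<and> \<Phi> ` (V \<inter> W) = \<Phi> ` W \<inter> ?E"
    unfolding C1_submanifold_def by blast
  then obtain W \<Phi> \<Psi> where W: "open W" "y \<in> W" "open (\<Phi> ` W)"
     and C1\<Phi>: "C1_on W \<Phi>" and C1\<Psi>: "C1_on (\<Phi> ` W) \<Psi>" and \<Psi>\<Phi>0: "\<forall>z\<in>W. \<Psi> (\<Phi> z) = z"
     and img: "\<Phi> ` (V \<inter> W) = \<Phi> ` W \<inter> ?E"
    by blast
  have \<Psi>\<Phi>: "\<And>z. z \<in> W \<Longrightarrow> \<Psi> (\<Phi> z) = z" using \<Psi>\<Phi>0 by blast
  from C1\<Phi> obtain \<Phi>' where d\<Phi>: "\<And>z. z \<in> W \<Longrightarrow> (\<Phi> has_derivative \<Phi>' z) (at z)"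
    unfolding C1_on_def by blast
  from C1\<Psi> obtain \<Psi>' where d\<Psi>: "\<And>z. z \<in> \<Phi> ` W \<Longrightarrow> (\<Psi> has_derivative \<Psi>' z) (at z)"
       and c\<Psi>: "continuous_on (\<Phi> ` W) (\<lambda>z. matrix (\<Psi>' z))" unfolding C1_on_def by blast
  have VW_in: "\<Psi> s \<in> V" if "s \<in> \<Phi> ` W" "projp p s = s" for s
  proof -
    have "s \<in> \<Phi> ` (V \<inter> W)" using img E_iff that by blast
    then obtain v where "v \<in> V" "v \<in> W" "s = \<Phi> v" by blast
    then show ?thesis using \<Psi>\<Phi> by simp
  qed
  define s0 where "s0 = \<Phi> y"
  have s0W: "s0 \<in> \<Phi> ` W" using W by (simp add: s0_def)
  have s0E: "projp p s0 = s0"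
  proof -
    have "s0 \<in> \<Phi> ` (V \<inter> W)" using yV W s0_def by blast
    then show ?thesis using img E_iff by blast
  qed
  have \<Psi>s0: "\<Psi> s0 = y" using \<Psi>\<Phi> W s0_def by simp
  have lin\<Psi>: "\<And>s. s \<in> \<Phi> ` W \<Longrightarrow> linear (\<Psi>' s)"
    using d\<Psi> has_derivative_linear by blast
  have bl\<Psi>: "\<And>s. s \<in> \<Phi> ` W \<Longrightarrow> bounded_linear (\<Psi>' s)"
    using d\<Psi> has_derivative_bounded_linear by blast
  have tang: "\<Psi>' s h \<in> tangent_space V (\<Psi> s)" if s: "s \<in> \<Phi> ` W" "projp p s = s" and h: "projp p h = h" for s h
  proof -
    obtain e1 where e1: "e1 > 0" "ball s e1 \<subseteq> \<Phi> ` W" using W(3) s(1) open_contains_ball by blast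
    define e where "e = e1 / (norm h + 1)"
    have e: "e > 0" using e1 unfolding e_def by (intro divide_pos_pos) (auto intro: add_nonneg_pos)
    have "\<Psi> (s + t *\<^sub>R h) \<in> V" if t: "t \<in> {-e<..<e}" for t
    proof -
      have "\<bar>t\<bar> < e" using t by auto
      then have "\<bar>t\<bar> * norm h \<le> e * norm h" by (simp add: mult_right_mono)
      also have "\<dots> < e1"
      proof -
        have d: "norm h + 1 > 0" by (simp add: add_nonneg_pos)
        have r: "norm h / (norm h + 1) < 1" using d by (simp add: divide_less_eq)
        have "e * norm h = e1 * (norm h / (norm h + 1))" by (simp add: e_def)
        then show ?thesis using mult_strict_left_mono[OF r e1(1)] by simp
      qed
      finally have "norm (t *\<^sub>R h) < e1" by simp
      then have "s + t *\<^sub>R h \<in> \<Phi> ` W" using e1 by (auto simp: dist_norm)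
      moreover have "projp p (s + t *\<^sub>R h) = s + t *\<^sub>R h" using s h by (simp add: projp_add projp_scaleR)
      ultimately show ?thesis using VW_in by blast
    qed
    moreover have "((\<lambda>t. \<Psi> (s + t *\<^sub>R h)) has_vector_derivative \<Psi>' s h) (at 0)"
    proof -
      have 1: "((\<lambda>t. s + t *\<^sub>R h) has_vector_derivative h) (at 0)"
        by (auto intro!: derivative_eq_intros)
      have 2: "(\<Psi> has_derivative \<Psi>' s) (at ((\<lambda>t. s + t *\<^sub>R h) 0) within (\<lambda>t. s + t *\<^sub>R h) ` UNIV)"
        using d\<Psi>[OF s(1)] by (simp add: has_derivative_at_withinI)
      show ?thesis using vector_derivative_diff_chain_within[OF 1 2] by (simp add: o_def)
    qed
    ultimately show ?thesis using tangentI[OF e, of "\<lambda>t. \<Psi> (s + t *\<^sub>R h)" V] by simp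
  qed
  have tangbound: "\<exists>L. (\<forall>j i. j \<notin> firstp p \<longrightarrow> i \<in> firstp p \<longrightarrow> \<bar>L j i\<bar> \<le> \<eta>) \<and>
      (\<forall>j. j \<notin> firstp p \<longrightarrow> v$j = (\<Sum>i\<in>firstp p. L j i * v$i))"
    if vt: "v \<in> tangent_space V w" and wV: "w \<in> V" for v w
  proof -
    obtain L where L1: "\<forall>j i. j \<notin> firstp p \<longrightarrow> i \<in> firstp p \<longrightarrow> \<bar>L j i\<bar> \<le> \<eta>"
      and L2: "tangent_space V w = {v. \<forall>j. j \<notin> firstp p \<longrightarrow> v$j = (\<Sum>i\<in>firstp p. L j i * v$i)}"
      using bspec[OF eb[unfolded eta_bounded_def] wV] by blast
    have "\<forall>j. j \<notin> firstp p \<longrightarrow> v$j = (\<Sum>i\<in>firstp p. L j i * v$i)"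
      using vt L2 by blast
    then show ?thesis using L1 by blast
  qed
  have "(\<Psi> \<circ> \<Phi> has_derivative \<Psi>' s0 \<circ> \<Phi>' y) (at y)"
    using diff_chain_at[OF d\<Phi>[OF W(2)]] d\<Psi>[OF s0W] by (simp add: s0_def)
  moreover have "(\<Psi> \<circ> \<Phi> has_derivative id) (at y)"
    by (rule has_derivative_transform_within_open[OF has_derivative_id W(1) W(2)])
       (simp add: \<Psi>\<Phi>)
  ultimately have comp_id: "\<Psi>' s0 \<circ> \<Phi>' y = id"
    using has_derivative_unique by blast
  have "surj (\<Psi>' s0)"
  proof (rule surjI[of _ "\<Phi>' y"])
    fix z show "\<Psi>' s0 (\<Phi>' y z) = z" using comp_id by (simp add: pointfree_idE)
  qed
  then have inj\<Psi>: "inj (\<Psi>' s0)"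
    using linear_surjective_imp_injective lin\<Psi>[OF s0W] by blast
  define F where "F z = projp p (\<Psi> (projp p z)) + (z - projp p z)" for z
  define U1 where "U1 = projp p -` (\<Phi> ` W)"
  have U1: "open U1" unfolding U1_def
    by (rule continuous_open_vimage[OF W(3)]) (simp add: bounded_linear_projp linear_continuous_at)
  define FF where "FF z h = projp p (\<Psi>' (projp p z) (projp p h)) + (h - projp p h)" for z h
  have blFF: "bounded_linear (FF z)" if "z \<in> U1" for z
  proof -
    have "projp p z \<in> \<Phi> ` W" using that U1_def by auto
    then have "bounded_linear (\<Psi>' (projp p z))" using bl\<Psi> by blast
    then have "bounded_linear (\<lambda>h. \<Psi>' (projp p z) (projp p h))"
      using bounded_linear_compose bounded_linear_projp by blast
    then have "bounded_linear (\<lambda>h. projp p (\<Psi>' (projp p z) (projp p h)))"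
      using bounded_linear_compose[OF bounded_linear_projp] by blast
    moreover have "bounded_linear (\<lambda>h. h - projp p h)"
      by (rule bounded_linear_sub[OF bounded_linear_ident bounded_linear_projp])
    ultimately show ?thesis unfolding FF_def by (rule bounded_linear_add)
  qed
  define F' where "F' z = Blinfun (FF z)" for z
  have F'apply: "blinfun_apply (F' z) = FF z" if "z \<in> U1" for z
    using blFF[OF that] by (simp add: F'_def bounded_linear_Blinfun_apply)
  have dF: "(F has_derivative blinfun_apply (F' z)) (at z)" if z: "z \<in> U1" for z
  proof -
    have zW: "projp p z \<in> \<Phi> ` W" using z U1_def by auto
    have 1: "(projp p has_derivative projp p) (at z)"
      by (rule bounded_linear_imp_has_derivative[OF bounded_linear_projp])
    have 2: "((\<lambda>z. \<Psi> (projp p z)) has_derivative (\<lambda>h. \<Psi>' (projp p z) (projp p h))) (at z)"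
      using has_derivative_compose[OF 1 d\<Psi>[OF zW]] by simp
    have 3: "((\<lambda>z. projp p (\<Psi> (projp p z))) has_derivative (\<lambda>h. projp p (\<Psi>' (projp p z) (projp p h)))) (at z)"
      by (rule bounded_linear.has_derivative[OF bounded_linear_projp 2])
    have 4: "((\<lambda>z. z - projp p z) has_derivative (\<lambda>h. h - projp p h)) (at z)"
      by (intro has_derivative_diff has_derivative_ident 1)
    show ?thesis unfolding F'apply[OF z] F_def[abs_def] FF_def
      by (rule has_derivative_add[OF 3 4])
  qed
  have cF': "continuous_on U1 F'"
  proof (rule continuous_on_blinfun_componentwise)
    fix i :: "real^('n::{finite,linorder})" assume "i \<in> Basis"
    have cm: "continuous_on U1 (\<lambda>z. matrix (\<Psi>' (projp p z)))"
      by (rule continuous_on_compose2[OF c\<Psi>]) (auto simp: U1_def intro!: continuous_intros)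
    have "continuous_on U1 (\<lambda>z. projp p (matrix (\<Psi>' (projp p z)) *v projp p i) + (i - projp p i))"
      by (intro continuous_intros matrix_apply_continuous_on cm)
    moreover have "blinfun_apply (F' z) i = projp p (matrix (\<Psi>' (projp p z)) *v projp p i) + (i - projp p i)"
      if "z \<in> U1" for z
    proof -
      have "projp p z \<in> \<Phi> ` W" using that U1_def by auto
      then have "linear (\<Psi>' (projp p z))" using lin\<Psi> by blast
      then show ?thesis using F'apply[OF that] FF_def matrix_works by simp
    qed
    ultimately show "continuous_on U1 (\<lambda>x. blinfun_apply (F' x) i)"
      by (metis (no_types, lifting) continuous_on_eq)
  qed
  have s0U1: "s0 \<in> U1" using s0W s0E U1_def by simp
  have injFF: "inj (FF s0)"
  proof -
    have "h = 0" if h0: "FF s0 h = 0" for h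
    proof -
      have e1: "projp p (FF s0 h) = projp p (\<Psi>' s0 (projp p h))"
        by (simp add: FF_def projp_add projp_diff s0E)
      have pz: "projp p (\<Psi>' s0 (projp p h)) = 0" using e1 h0 by simp
      then have "h - projp p h = 0" using h0 by (simp add: FF_def s0E)
      then have hE: "projp p h = h" by simp
      have "\<Psi>' s0 h \<in> tangent_space V y" using tang[OF s0W s0E hE] \<Psi>s0 by simp
      then obtain L where L: "\<forall>j. j \<notin> firstp p \<longrightarrow> \<Psi>' s0 h $ j = (\<Sum>i\<in>firstp p. L j i * \<Psi>' s0 h $ i)"
        using tangbound[OF _ yV] by blast
      have z1: "\<Psi>' s0 h $ i = 0" if "i \<in> firstp p" for i
      proof -
        have "projp p (\<Psi>' s0 h) $ i = 0" using pz hE by simp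
        then show ?thesis using that by simp
      qed
      have "\<Psi>' s0 h = 0"
      proof (rule vec_eq_iff[THEN iffD2], rule allI)
        fix j show "\<Psi>' s0 h $ j = 0 $ j"
          using z1 L by (cases "j \<in> firstp p") auto
      qed
      moreover have "\<Psi>' s0 0 = 0" using lin\<Psi>[OF s0W] by (rule linear_0)
      ultimately show "h = 0" using inj\<Psi> injD[of "\<Psi>' s0" h 0] by simp
    qed
    moreover have "linear (FF s0)" using blFF[OF s0U1] bounded_linear.linear by blast
    ultimately show ?thesis by (metis linear_injective_0)
  qed
  obtain g0 where g0: "linear g0" "g0 \<circ> FF s0 = id"
    using linear_injective_left_inverse[OF _ injFF] blFF[OF s0U1] bounded_linear.linear by blast
  define invf where "invf = Blinfun g0"
  have "invf o\<^sub>L F' s0 = id_blinfun"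
  proof (rule blinfun_eqI)
    fix i
    have "bounded_linear g0" using g0(1) linear_conv_bounded_linear by blast
    then show "blinfun_apply (invf o\<^sub>L F' s0) i = blinfun_apply id_blinfun i"
      using g0(2) F'apply[OF s0U1] unfolding invf_def
      by (simp add: bounded_linear_Blinfun_apply pointfree_idE)
  qed
  then obtain U' V' G G' where IFT: "open U'" "U' \<subseteq> U1" "s0 \<in> U'" "open V'" "F s0 \<in> V'"
      "homeomorphism U' V' F G"
      "\<And>y. y \<in> V' \<Longrightarrow> (G has_derivative (G' y)) (at y)"
    using inverse_function_theorem[OF U1 dF cF' s0U1, of invf] by metis
  have Fs0: "F s0 = projp p y" using s0E \<Psi>s0 by (simp add: F_def)
  from IFT(6) have hom: "G ` V' = U'" "F ` U' = V'" "\<And>x. x \<in> U' \<Longrightarrow> G (F x) = x"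
      "\<And>y. y \<in> V' \<Longrightarrow> F (G y) = y"
    unfolding homeomorphism_def by auto
  have Gprop: "projp p (G u) = G u \<and> G u \<in> \<Phi> ` W \<and> projp p (\<Psi> (G u)) = u \<and> \<Psi> (G u) \<in> V"
    if u: "u \<in> V'" "projp p u = u" for u
  proof -
    have sU: "G u \<in> U1" using hom(1) u IFT(2) by blast
    have Fs: "F (G u) = u" using hom(4) u by blast
    then have "projp p (F (G u)) = u" using u by simp
    then have a: "projp p (\<Psi> (projp p (G u))) = u"
      by (simp add: F_def projp_add)
    then have "G u - projp p (G u) = 0" using Fs by (simp add: F_def)
    then have b: "projp p (G u) = G u" by simp
    have c: "G u \<in> \<Phi> ` W" using sU b U1_def by (metis vimageE)
    show ?thesis using a b c VW_in[OF c] by simp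
  qed
  define g where "g z = \<Psi> (G z) - projp p (\<Psi> (G z))" for z
  define N where "N = {z \<in> W. \<Phi> z \<in> U'}"
  have cont\<Phi>: "continuous_on W \<Phi>"
    using d\<Phi> has_derivative_continuous continuous_at_imp_continuous_on by blast
  show ?thesis
  proof
    show "open N"
    proof -
      have "N = W \<inter> \<Phi> -` U'" unfolding N_def by auto
      then show ?thesis using continuous_open_preimage[OF cont\<Phi> W(1) IFT(1)] by simp
    qed
    show "y \<in> N" unfolding N_def using W(2) IFT(3) s0_def by simp
    show "open V'" by fact
    show "projp p y \<in> V'" using IFT(5) Fs0 by simp
    show "u + g u \<in> V" if "u \<in> V'" "projp p u = u" for u
      using Gprop[OF that] by (simp add: g_def)
    show "projp p (g u) = 0" for u by (simp add: g_def projp_diff)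
    show "projp p v \<in> V' \<and> v = projp p v + g (projp p v)" if v: "v \<in> V" "v \<in> N" for v
    proof -
      have vW: "v \<in> W" and sU: "\<Phi> v \<in> U'" using v N_def by auto
      have "\<Phi> v \<in> \<Phi> ` (V \<inter> W)" using v vW by blast
      then have sE: "projp p (\<Phi> v) = \<Phi> v" using img E_iff by blast
      have "F (\<Phi> v) = projp p v" using sE \<Psi>\<Phi>[OF vW] by (simp add: F_def)
      then have 1: "projp p v \<in> V'" and 2: "G (projp p v) = \<Phi> v"
        using hom(2,3) sU by (metis image_eqI)+
      show ?thesis using 1 2 \<Psi>\<Phi>[OF vW] by (simp add: g_def)
    qed
    show "\<exists>D. (g has_derivative D) (at u) \<and>
        (\<forall>h. projp p h = h \<longrightarrow> (\<forall>j. j \<notin> firstp p \<longrightarrow> \<bar>D h $ j\<bar> \<le> real p * \<eta> * infnorm h))"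
      if u: "u \<in> V'" "projp p u = u" for u
    proof -
      have GP: "projp p (G u) = G u" "G u \<in> \<Phi> ` W" "projp p (\<Psi> (G u)) = u" "\<Psi> (G u) \<in> V"
        using Gprop[OF u] by auto
      have d1: "((\<lambda>z. \<Psi> (G z)) has_derivative (\<lambda>h. \<Psi>' (G u) (G' u h))) (at u)"
        using has_derivative_compose[OF IFT(7)[OF u(1)] d\<Psi>[OF GP(2)]] by simp
      have d2: "(g has_derivative (\<lambda>h. \<Psi>' (G u) (G' u h) - projp p (\<Psi>' (G u) (G' u h)))) (at u)"
        unfolding g_def[abs_def]
        by (intro has_derivative_diff d1 bounded_linear.has_derivative[OF bounded_linear_projp])
      have bnd: "\<bar>(\<Psi>' (G u) (G' u h) - projp p (\<Psi>' (G u) (G' u h))) $ j\<bar> \<le> real p * \<eta> * infnorm h"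
        if h: "projp p h = h" and j: "j \<notin> firstp p" for h j
      proof -
        define v where "v = \<Psi>' (G u) (G' u h)"
        obtain e1 where e1: "e1 > 0" "ball u e1 \<subseteq> V'" using IFT(4) u(1) open_contains_ball by blast
        define e where "e = e1 / (norm h + 1)"
        have e: "e > 0" using e1 unfolding e_def by (intro divide_pos_pos) (auto intro: add_nonneg_pos)
        have inball: "u + t *\<^sub>R h \<in> V' \<and> projp p (u + t *\<^sub>R h) = u + t *\<^sub>R h" if t: "\<bar>t\<bar> < e" for t
        proof -
          have "\<bar>t\<bar> * norm h \<le> e * norm h" using t by (simp add: mult_right_mono)
          also have "\<dots> < e1" proof -
        have d: "norm h + 1 > 0" by (simp add: add_nonneg_pos)
        have r: "norm h / (norm h + 1) < 1" using d by (simp add: divide_less_eq)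
        have "e * norm h = e1 * (norm h / (norm h + 1))" by (simp add: e_def)
        then show ?thesis using mult_strict_left_mono[OF r e1(1)] by simp
      qed
          finally have "norm (t *\<^sub>R h) < e1" by simp
          then have "u + t *\<^sub>R h \<in> V'" using e1 by (auto simp: dist_norm)
          then show ?thesis using u h by (simp add: projp_add projp_scaleR)
        qed
        have dcurve: "((\<lambda>t. \<Psi> (G (u + t *\<^sub>R h))) has_vector_derivative v) (at 0)"
        proof -
          have 1: "((\<lambda>t. u + t *\<^sub>R h) has_vector_derivative h) (at 0)"
            by (auto intro!: derivative_eq_intros)
          have 2: "((\<lambda>z. \<Psi> (G z)) has_derivative (\<lambda>h. \<Psi>' (G u) (G' u h))) (at ((\<lambda>t. u + t *\<^sub>R h) 0) within (\<lambda>t. u + t *\<^sub>R h) ` UNIV)"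
            using d1 by (simp add: has_derivative_at_withinI)
          show ?thesis using vector_derivative_diff_chain_within[OF 1 2] by (simp add: o_def v_def)
        qed
        have "v \<in> tangent_space V (\<Psi> (G (u + 0 *\<^sub>R h)))"
          by (rule tangentI[OF e _ dcurve]) (use inball Gprop in auto)
        then have vt: "v \<in> tangent_space V (\<Psi> (G u))" by simp
        obtain L where Lb: "\<forall>j i. j \<notin> firstp p \<longrightarrow> i \<in> firstp p \<longrightarrow> \<bar>L j i\<bar> \<le> \<eta>"
           and Lv: "\<forall>j. j \<notin> firstp p \<longrightarrow> v$j = (\<Sum>i\<in>firstp p. L j i * v$i)"
          using tangbound[OF vt GP(4)] by blast
        have "((\<lambda>t. projp p (\<Psi> (G (u + t *\<^sub>R h)))) has_vector_derivative projp p v) (at 0)"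
          by (rule projp_has_vector_derivative[OF dcurve])
        moreover have "projp p (\<Psi> (G (u + t *\<^sub>R h))) = u + t *\<^sub>R h" if "t \<in> {-e<..<e}" for t
          using inball[of t] Gprop that by auto
        ultimately have "((\<lambda>t. u + t *\<^sub>R h) has_vector_derivative projp p v) (at 0)"
          using has_vector_derivative_transform_within_open[of _ "projp p v" 0 "{-e<..<e}"] e
          by auto
        moreover have "((\<lambda>t. u + t *\<^sub>R h) has_vector_derivative h) (at 0)"
          by (auto intro!: derivative_eq_intros)
        ultimately have pv: "projp p v = h" using vector_derivative_unique_at by blast
        have vi: "v $ i = h $ i" if "i \<in> firstp p" for i
          using pv that by (metis projp_nth)
        have "\<bar>(v - projp p v) $ j\<bar> = \<bar>\<Sum>i\<in>firstp p. L j i * h$i\<bar>"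
          using Lv j vi by simp
        also have "\<dots> \<le> (\<Sum>i\<in>firstp p. \<bar>L j i * h$i\<bar>)" by (rule sum_abs)
        also have "\<dots> \<le> (\<Sum>i\<in>(firstp p :: 'n set). \<eta> * infnorm h)"
        proof (rule sum_mono)
          fix i :: 'n assume i: "i \<in> firstp p"
          have "\<bar>L j i * h$i\<bar> = \<bar>L j i\<bar> * \<bar>h$i\<bar>" by (simp add: abs_mult)
          also have "\<dots> \<le> \<eta> * infnorm h"
            using Lb j i component_le_infnorm_cart[of h i] eta
            by (intro mult_mono) auto
          finally show "\<bar>L j i * h$i\<bar> \<le> \<eta> * infnorm h" .
        qed
        also have "\<dots> = real (card (firstp p :: 'n set)) * (\<eta> * infnorm h)" by simp
        also have "\<dots> \<le> real p * (\<eta> * infnorm h)"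
          using card_firstp[of p] eta infnorm_pos_le[of h]
          by (intro mult_right_mono) auto
        finally show ?thesis by (simp add: v_def mult.assoc)
      qed
      show ?thesis using d2 bnd by blast
    qed
  qed
qed

definition bball :: "nat \<Rightarrow> (real,'n) vec \<Rightarrow> real \<Rightarrow> ((real,'n::{finite,linorder}) vec) set" where
  "bball p c d = {u. projp p u = u \<and> infnorm (u - c) < d}"

definition cyl :: "nat \<Rightarrow> real \<Rightarrow> (real,'n) vec \<Rightarrow> real \<Rightarrow> ((real,'n::{finite,linorder}) vec) set" where
  "cyl p M y d = {z. infnorm (projp p z - projp p y) < d \<and>
      infnorm ((z - projp p z) - (y - projp p y)) < M * d}"

definition lipK :: "nat \<Rightarrow> real \<Rightarrow> ((real,'n) vec) set \<Rightarrow> ((real,'n) vec \<Rightarrow> (real,'n::{finite,linorder}) vec) \<Rightarrow> bool" where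
  "lipK p K D h \<longleftrightarrow> (\<forall>u\<in>D. projp p (h u) = 0) \<and> (\<forall>u\<in>D. \<forall>v\<in>D. infnorm (h u - h v) \<le> K * infnorm (u - v))"

lemma lipK_mono: "lipK p K D h \<Longrightarrow> D' \<subseteq> D \<Longrightarrow> lipK p K D' h"
  unfolding lipK_def by blast

lemma projp_zero_nth: "projp p w = 0 \<Longrightarrow> i \<in> firstp p \<Longrightarrow> w $ i = 0"
  by (metis projp_nth zero_index)

lemma convex_bball: "convex (bball p c d)"
proof (rule convexI)
  fix x y :: "real^'a::{finite,linorder}" and u v :: real
  assume x: "x \<in> bball p c d" and y: "y \<in> bball p c d" and uv: "0 \<le> u" "0 \<le> v" "u + v = 1"
  have "projp p (u *\<^sub>R x + v *\<^sub>R y) = u *\<^sub>R x + v *\<^sub>R y"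
    using x y by (simp add: bball_def projp_add projp_scaleR)
  moreover have "infnorm (u *\<^sub>R x + v *\<^sub>R y - c) < d"
  proof -
    have "u *\<^sub>R x + v *\<^sub>R y - c = u *\<^sub>R (x - c) + v *\<^sub>R (y - c)"
      using uv by (simp add: algebra_simps flip: scaleR_add_left)
    then have "infnorm (u *\<^sub>R x + v *\<^sub>R y - c) \<le> infnorm (u *\<^sub>R (x - c)) + infnorm (v *\<^sub>R (y - c))"
      using infnorm_triangle[of "u *\<^sub>R (x - c)" "v *\<^sub>R (y - c)"] by simp
    also have "\<dots> = u * infnorm (x - c) + v * infnorm (y - c)"
      using uv by (simp add: infnorm_mul)
    also have "\<dots> < d"
    proof (cases "u = 0")
      case True then show ?thesis using uv y by (simp add: bball_def)
    next
      case False
      then have "u * infnorm (x - c) < u * d" using uv x by (simp add: bball_def)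
      moreover have "v * infnorm (y - c) \<le> v * d" using uv y by (intro mult_left_mono) (auto simp: bball_def)
      moreover have "u * d + v * d = d" using uv by (simp add: distrib_right[symmetric])
      ultimately show ?thesis by linarith
    qed
    finally show ?thesis .
  qed
  ultimately show "u *\<^sub>R x + v *\<^sub>R y \<in> bball p c d" by (simp add: bball_def)
qed

lemma center_in_bball: "projp p c = c \<Longrightarrow> d > 0 \<Longrightarrow> c \<in> bball p c d"
  by (simp add: bball_def infnorm_0)

lemma mvt_lip:
  fixes g :: "(real,'n::{finite,linorder}) vec \<Rightarrow> (real,'n) vec"
  assumes S: "convex S" "\<And>u. u \<in> S \<Longrightarrow> projp p u = u"
    and der: "\<And>u. u \<in> S \<Longrightarrow> \<exists>D. (g has_derivative D) (at u) \<and>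
        (\<forall>h. projp p h = h \<longrightarrow> (\<forall>j. j \<notin> firstp p \<longrightarrow> \<bar>D h $ j\<bar> \<le> K * infnorm h))"
    and g0: "\<And>u. projp p (g u) = 0" and K: "K \<ge> 0"
    and a: "a \<in> S" and b: "b \<in> S"
  shows "infnorm (g a - g b) \<le> K * infnorm (a - b)"
proof (rule infnorm_le_cart)
  fix j :: 'n
  show "\<bar>(g a - g b) $ j\<bar> \<le> K * infnorm (a - b)"
  proof (cases "j \<in> firstp p")
    case True
    then show ?thesis using g0 K projp_zero_nth[of p "g a" j] projp_zero_nth[of p "g b" j]
      by (simp add: infnorm_pos_le)
  next
    case jn: False
    obtain Dg where Dg: "\<And>u. u \<in> S \<Longrightarrow> (g has_derivative Dg u) (at u) \<and>
        (\<forall>h. projp p h = h \<longrightarrow> (\<forall>j. j \<notin> firstp p \<longrightarrow> \<bar>Dg u h $ j\<bar> \<le> K * infnorm h))"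
    proof -
      have "\<forall>u\<in>S. \<exists>D. (g has_derivative D) (at u) \<and>
        (\<forall>h. projp p h = h \<longrightarrow> (\<forall>j. j \<notin> firstp p \<longrightarrow> \<bar>D h $ j\<bar> \<le> K * infnorm h))"
        using der by blast
      then obtain Dg where "\<forall>u\<in>S. (g has_derivative Dg u) (at u) \<and>
        (\<forall>h. projp p h = h \<longrightarrow> (\<forall>j. j \<notin> firstp p \<longrightarrow> \<bar>Dg u h $ j\<bar> \<le> K * infnorm h))"
        by (rule bchoice[THEN exE]) blast
      then show ?thesis using that by blast
    qed
    define \<gamma> where "\<gamma> t = b + t *\<^sub>R (a - b)" for t :: real
    have \<gamma>S: "\<gamma> t \<in> S" if "0 \<le> t" "t \<le> 1" for t
    proof -
      have "\<gamma> t = (1 - t) *\<^sub>R b + t *\<^sub>R a" by (simp add: \<gamma>_def algebra_simps)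
      then show ?thesis using convexD[OF S(1) b a, of "1 - t" t] that by simp
    qed
    have abE: "projp p (a - b) = a - b" using S(2)[OF a] S(2)[OF b] by (simp add: projp_diff)
    have "\<exists>x\<in>{0<..<1}. (\<lambda>t. g (\<gamma> t) $ j) 1 - (\<lambda>t. g (\<gamma> t) $ j) 0 = (\<lambda>s. Dg (\<gamma> x) (s *\<^sub>R (a - b)) $ j) (1 - 0)"
    proof (rule mvt_simple[of 0 1 "\<lambda>t. g (\<gamma> t) $ j" "\<lambda>x s. Dg (\<gamma> x) (s *\<^sub>R (a - b)) $ j"])
      fix x :: real assume x: "0 \<le> x" "x \<le> 1"
      have 1: "(\<gamma> has_derivative (\<lambda>s. s *\<^sub>R (a - b))) (at x within {0..1})"
        unfolding \<gamma>_def by (auto intro!: derivative_eq_intros)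
      have 2: "(g has_derivative Dg (\<gamma> x)) (at (\<gamma> x))" using Dg \<gamma>S x by blast
      have "((\<lambda>t. g (\<gamma> t)) has_derivative (\<lambda>s. Dg (\<gamma> x) (s *\<^sub>R (a - b)))) (at x within {0..1})"
        using has_derivative_compose[OF 1 2] by simp
      then show "((\<lambda>t. g (\<gamma> t) $ j) has_derivative (\<lambda>s. Dg (\<gamma> x) (s *\<^sub>R (a - b)) $ j)) (at x within {0..1})"
        by (rule bounded_linear.has_derivative[OF bounded_linear_vec_nth])
    qed simp
    then obtain x where x: "0 < x" "x < 1" and eq: "g (\<gamma> 1) $ j - g (\<gamma> 0) $ j = Dg (\<gamma> x) (a - b) $ j"
      by auto
    have "\<bar>Dg (\<gamma> x) (a - b) $ j\<bar> \<le> K * infnorm (a - b)"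
      using Dg[OF \<gamma>S] x abE jn by auto
    moreover have "\<gamma> 1 = a" "\<gamma> 0 = b" by (auto simp: \<gamma>_def)
    ultimately show ?thesis using eq by simp
  qed
qed

lemma open_cyl: "open (cyl p M y d)"
  unfolding cyl_def
  by (intro open_Collect_conj open_Collect_less continuous_intros continuous_on_infnorm)

lemma y_in_cyl: "d > 0 \<Longrightarrow> M > 0 \<Longrightarrow> y \<in> cyl p M y d"
  by (simp add: cyl_def infnorm_0)

lemma cyl_sub_ball:
  fixes y :: "real^'n::{finite,linorder}"
  assumes "M \<ge> 0" "d \<ge> 0" "sqrt (real CARD('n)) * ((M + 1) * d) < e"
  shows "cyl p M y d \<subseteq> ball y e"
proof
  fix z assume z: "z \<in> cyl p M y d"
  have dd: "d \<le> (M + 1) * d" "M * d \<le> (M + 1) * d" using assms by (simp_all add: algebra_simps)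
  have "infnorm (z - y) < (M + 1) * d"
  proof (rule infnorm_split_less[of p])
    have z1: "infnorm (projp p z - projp p y) < d" and z2: "infnorm ((z - projp p z) - (y - projp p y)) < M * d"
      using z by (simp_all add: cyl_def)
    have "projp p (z - y) = projp p z - projp p y" by (simp add: projp_diff)
    then show "infnorm (projp p (z - y)) < (M + 1) * d"
      using z1 dd by simp
    have eq: "z - y - projp p (z - y) = (z - projp p z) - (y - projp p y)" by (simp add: projp_diff)
    have "infnorm (z - y - projp p (z - y)) = infnorm ((z - projp p z) - (y - projp p y))" by (simp only: eq)
    then show "infnorm (z - y - projp p (z - y)) < (M + 1) * d"
      using z2 dd by linarith
  qed
  moreover have c: "sqrt (real CARD('n)) > 0" by simp
  ultimately have "sqrt (real CARD('n)) * infnorm (z - y) < sqrt (real CARD('n)) * ((M + 1) * d)"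
    by (simp add: mult_strict_left_mono)
  then have "norm (z - y) < e"
    using norm_le_sqrt_infnorm[of "z - y"] assms(3) by linarith
  then show "z \<in> ball y e" by (simp add: dist_norm norm_minus_commute)
qed

lemma graph_in_cyl:
  fixes y :: "real^'n::{finite,linorder}"
  assumes lip: "lipK p K D h" and hy: "h (projp p y) = y - projp p y" and yD: "projp p y \<in> D"
    and u: "u \<in> D" "u \<in> bball p (projp p y) d" and K: "K \<ge> 0" "K < M"
  shows "u + h u \<in> cyl p M y d"
proof -
  have pu: "projp p u = u" using u by (simp add: bball_def)
  have ph: "projp p (h u) = 0" using lip u by (simp add: lipK_def)
  have d: "infnorm (u - projp p y) < d" using u by (simp add: bball_def)
  then have dpos: "d > 0" using infnorm_pos_le[of "u - projp p y"] by linarith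
  have "infnorm (h u - h (projp p y)) \<le> K * infnorm (u - projp p y)"
    using lip u yD by (simp add: lipK_def)
  also have "\<dots> \<le> K * d" using d K by (intro mult_left_mono) auto
  also have "\<dots> < M * d" using K dpos by simp
  finally have "infnorm (h u - h (projp p y)) < M * d" .
  then show ?thesis using pu ph d hy by (simp add: cyl_def projp_add)
qed

lemma local_graph:
  fixes V :: "(real^'n::{finite,linorder}) set"
  assumes man: "C1_submanifold p V" and eb: "eta_bounded p \<eta> V" and eta: "\<eta> \<ge> 0" and yV: "y \<in> V"
    and M: "M > real p * \<eta>"
  shows "\<exists>\<delta>>0. \<exists>h. lipK p (real p * \<eta>) (bball p (projp p y) \<delta>) h \<and>
           V \<inter> cyl p M y \<delta> = graph (bball p (projp p y) \<delta>) h"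
proof -
  let ?K = "real p * \<eta>"
  have K0: "?K \<ge> 0" using eta by simp
  have M0: "M > 0" using M K0 by linarith
  obtain N Ob g where N: "open N" "y \<in> N" and Ob: "open Ob" "projp p y \<in> Ob"
    and gV: "\<And>u. u \<in> Ob \<Longrightarrow> projp p u = u \<Longrightarrow> u + g u \<in> V"
    and g0: "\<And>u. projp p (g u) = 0"
    and VN: "\<And>v. v \<in> V \<Longrightarrow> v \<in> N \<Longrightarrow> projp p v \<in> Ob \<and> v = projp p v + g (projp p v)"
    and der: "\<And>u. u \<in> Ob \<Longrightarrow> projp p u = u \<Longrightarrow> \<exists>D. (g has_derivative D) (at u) \<and>
        (\<forall>h. projp p h = h \<longrightarrow> (\<forall>j. j \<notin> firstp p \<longrightarrow> \<bar>D h $ j\<bar> \<le> real p * \<eta> * infnorm h))"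
    by (rule chart_graph[OF man eb eta yV]) blast
  obtain e1 where e1: "e1 > 0" "ball y e1 \<subseteq> N" using N open_contains_ball by blast
  obtain e2 where e2: "e2 > 0" "ball (projp p y) e2 \<subseteq> Ob" using Ob open_contains_ball by blast
  define c where "c = sqrt (real CARD('n))"
  have c: "c \<ge> 0" by (simp add: c_def)
  define \<delta> where "\<delta> = min e1 e2 / ((c + 1) * (M + 1))"
  have \<delta>: "\<delta> > 0" using e1 e2 c M0 by (simp add: \<delta>_def)
  have key: "c * ((M + 1) * \<delta>) < min e1 e2"
  proof -
    have "(M + 1) * \<delta> = min e1 e2 / (c + 1)"
      using c M0 by (simp add: \<delta>_def)
    then have "c * ((M + 1) * \<delta>) = min e1 e2 * (c / (c + 1))"
      by simp
    also have "\<dots> < min e1 e2 * 1"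
      using c e1 e2 by (intro mult_strict_left_mono) auto
    finally show ?thesis by simp
  qed
  have cylN: "cyl p M y \<delta> \<subseteq> N"
    using cyl_sub_ball[of M \<delta> e1 p y] key M0 \<delta> e1 unfolding c_def by force
  have bbOb: "bball p (projp p y) \<delta> \<subseteq> Ob"
  proof
    fix u assume u: "u \<in> bball p (projp p y) \<delta>"
    have "norm (u - projp p y) \<le> c * infnorm (u - projp p y)"
      using norm_le_sqrt_infnorm c_def by blast
    also have "\<dots> \<le> c * \<delta>" using u c by (intro mult_left_mono) (auto simp: bball_def)
    also have "\<dots> \<le> c * ((M + 1) * \<delta>)" using c \<delta> M0 by (intro mult_left_mono) auto
    also have "\<dots> < e2" using key e1 e2 by linarith
    finally show "u \<in> Ob" using e2 by (auto simp: dist_norm norm_minus_commute)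
  qed
  have gy: "g (projp p y) = y - projp p y"
    using VN[OF yV N(2)] by (metis add_diff_cancel_left')
  have lip: "lipK p ?K (bball p (projp p y) \<delta>) g"
    unfolding lipK_def
  proof (intro conjI ballI)
    show "projp p (g u) = 0" for u by (rule g0)
    fix u v assume u: "u \<in> bball p (projp p y) \<delta>" and v: "v \<in> bball p (projp p y) \<delta>"
    show "infnorm (g u - g v) \<le> ?K * infnorm (u - v)"
    proof (rule mvt_lip[OF convex_bball _ _ g0 K0 u v])
      show "\<And>u. u \<in> bball p (projp p y) \<delta> \<Longrightarrow> projp p u = u" by (simp add: bball_def)
      show "\<And>u. u \<in> bball p (projp p y) \<delta> \<Longrightarrow> \<exists>D. (g has_derivative D) (at u) \<and>
        (\<forall>h. projp p h = h \<longrightarrow> (\<forall>j. j \<notin> firstp p \<longrightarrow> \<bar>D h $ j\<bar> \<le> ?K * infnorm h))"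
        using der bbOb by (auto simp: bball_def)
    qed
  qed
  have yB: "projp p y \<in> bball p (projp p y) \<delta>" using \<delta> by (simp add: bball_def infnorm_0)
  have "V \<inter> cyl p M y \<delta> = graph (bball p (projp p y) \<delta>) g"
  proof
    show "V \<inter> cyl p M y \<delta> \<subseteq> graph (bball p (projp p y) \<delta>) g"
    proof
      fix z assume z: "z \<in> V \<inter> cyl p M y \<delta>"
      then have "z = projp p z + g (projp p z)" using VN cylN by blast
      moreover have "projp p z \<in> bball p (projp p y) \<delta>" using z by (simp add: cyl_def bball_def)
      ultimately show "z \<in> graph (bball p (projp p y) \<delta>) g" unfolding graph_def by blast
    qed
    show "graph (bball p (projp p y) \<delta>) g \<subseteq> V \<inter> cyl p M y \<delta>"
    proof
      fix z assume "z \<in> graph (bball p (projp p y) \<delta>) g"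
      then obtain u where u: "u \<in> bball p (projp p y) \<delta>" "z = u + g u" unfolding graph_def by blast
      have "u + g u \<in> V" using gV bbOb u by (auto simp: bball_def)
      moreover have "u + g u \<in> cyl p M y \<delta>"
        by (rule graph_in_cyl[OF lip gy yB u(1) u(1) K0 M])
      ultimately show "z \<in> V \<inter> cyl p M y \<delta>" using u by simp
    qed
  qed
  then show ?thesis using lip \<delta> by blast
qed

lemma convex_infnorm_le: "convex {u::real^'n. infnorm (u - c) \<le> r}"
proof (rule convexI)
  fix x y :: "real^'n" and u v :: real
  assume x: "x \<in> {u. infnorm (u - c) \<le> r}" and y: "y \<in> {u. infnorm (u - c) \<le> r}"
    and uv: "0 \<le> u" "0 \<le> v" "u + v = 1"
  have "u *\<^sub>R x + v *\<^sub>R y - c = u *\<^sub>R (x - c) + v *\<^sub>R (y - c)"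
    using uv by (simp add: algebra_simps flip: scaleR_add_left)
  then have "infnorm (u *\<^sub>R x + v *\<^sub>R y - c) \<le> infnorm (u *\<^sub>R (x - c)) + infnorm (v *\<^sub>R (y - c))"
    using infnorm_triangle[of "u *\<^sub>R (x - c)" "v *\<^sub>R (y - c)"] by simp
  also have "\<dots> = u * infnorm (x - c) + v * infnorm (y - c)"
    using uv by (simp add: infnorm_mul)
  also have "\<dots> \<le> u * r + v * r"
    using x y uv by (intro add_mono mult_left_mono) auto
  also have "\<dots> = r" using uv by (simp add: distrib_right[symmetric])
  finally show "u *\<^sub>R x + v *\<^sub>R y \<in> {u. infnorm (u - c) \<le> r}" by simp
qed

lemma lipK_continuous_on:
  fixes g :: "(real,'n::{finite,linorder}) vec \<Rightarrow> (real,'n) vec"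
  assumes "lipK p K D g" "K \<ge> 0"
  shows "continuous_on D g"
proof (rule lipschitz_on_continuous_on)
  let ?c = "sqrt (real CARD('n))"
  show "(?c * K)-lipschitz_on D g"
  proof (rule lipschitz_onI)
    fix u v assume "u \<in> D" "v \<in> D"
    have "dist (g u) (g v) = norm (g u - g v)" by (simp add: dist_norm)
    also have "\<dots> \<le> ?c * infnorm (g u - g v)" by (rule norm_le_sqrt_infnorm)
    also have "\<dots> \<le> ?c * (K * infnorm (u - v))"
      using assms \<open>u \<in> D\<close> \<open>v \<in> D\<close> by (intro mult_left_mono) (auto simp: lipK_def)
    also have "\<dots> \<le> ?c * (K * norm (u - v))"
      using assms by (intro mult_left_mono infnorm_le_norm) auto
    finally show "dist (g u) (g v) \<le> ?c * K * dist u v" by (simp add: dist_norm mult.assoc)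
  qed (use assms in simp)
qed

lemma local_lip_global:
  fixes f :: "(real,'n::finite) vec \<Rightarrow> (real,'n) vec"
  assumes S: "convex S" and e: "\<epsilon> > 0" and K: "K \<ge> 0"
    and loc: "\<And>u v. u \<in> S \<Longrightarrow> v \<in> S \<Longrightarrow> infnorm (u - v) < \<epsilon> \<Longrightarrow> infnorm (f u - f v) \<le> K * infnorm (u - v)"
    and a: "a \<in> S" and b: "b \<in> S"
  shows "infnorm (f a - f b) \<le> K * infnorm (a - b)"
proof -
  define t where "t = infnorm (a - b)"
  define N :: nat where "N = nat \<lceil>t / \<epsilon>\<rceil> + 1"
  have Npos: "real N > 0" by (simp add: N_def)
  have "t / \<epsilon> < real N" unfolding N_def by linarith
  then have tN: "t / real N < \<epsilon>" using e Npos by (simp add: field_simps)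
  define q where "q i = b + (real i / real N) *\<^sub>R (a - b)" for i :: nat
  have qS: "q i \<in> S" if "i \<le> N" for i
  proof -
    have le1: "real i / real N \<le> 1" using that Npos by simp
    have "q i = (1 - real i / real N) *\<^sub>R b + (real i / real N) *\<^sub>R a"
      by (simp add: q_def algebra_simps)
    then show ?thesis using convexD[OF S b a, of "1 - real i / real N" "real i / real N"] le1
      by simp
  qed
  have qstep: "infnorm (q (Suc i) - q i) = t / real N" for i
  proof -
    have "q (Suc i) - q i = (real (Suc i) / real N - real i / real N) *\<^sub>R (a - b)"
      by (simp add: q_def scaleR_diff_left)
    also have "real (Suc i) / real N - real i / real N = 1 / real N"
      by (simp add: diff_divide_distrib[symmetric])
    finally have "q (Suc i) - q i = (1 / real N) *\<^sub>R (a - b)" .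
    then show ?thesis by (simp add: infnorm_mul t_def)
  qed
  have "infnorm (f (q i) - f b) \<le> K * (real i * (t / real N))" if "i \<le> N" for i
    using that
  proof (induction i)
    case 0
    then show ?case by (simp add: q_def infnorm_0)
  next
    case (Suc i)
    have A: "infnorm (f (q (Suc i)) - f b) \<le> infnorm (f (q (Suc i)) - f (q i)) + infnorm (f (q i) - f b)"
      using infnorm_triangle[of "f (q (Suc i)) - f (q i)" "f (q i) - f b"] by simp
    have B: "infnorm (f (q (Suc i)) - f (q i)) \<le> K * (t / real N)"
      using loc[OF qS qS, of "Suc i" i] Suc.prems qstep tN by simp
    have C: "infnorm (f (q i) - f b) \<le> K * (real i * (t / real N))"
      using Suc by simp
    have "infnorm (f (q (Suc i)) - f b) \<le> K * (t / real N) + K * (real i * (t / real N))"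
      using A B C by linarith
    also have "\<dots> = K * (real (Suc i) * (t / real N))" by (simp add: distrib_left distrib_right add_divide_distrib)
    finally show ?case .
  qed
  from this[of N] show ?thesis using Npos by (simp add: q_def t_def)
qed

lemma uniform_local_graph:
  fixes V Q :: "(real^'n::{finite,linorder}) set"
  assumes man: "C1_submanifold p V" and eb: "eta_bounded p \<eta> V" and eta: "\<eta> \<ge> 0"
    and M: "M > real p * \<eta>" and cpt: "compact (V \<inter> Q)"
  shows "\<exists>\<delta>>0. \<forall>y\<in>V\<inter>Q. \<exists>h. lipK p (real p * \<eta>) (bball p (projp p y) \<delta>) h \<and>
           V \<inter> cyl p M y \<delta> = graph (bball p (projp p y) \<delta>) h"
proof -
  let ?K = "real p * \<eta>"
  have K0: "?K \<ge> 0" using eta by simp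
  have M0: "M > 0" using M K0 by linarith
  have "\<forall>y\<in>V. \<exists>\<delta>. \<delta> > 0 \<and> (\<exists>h. lipK p ?K (bball p (projp p y) \<delta>) h \<and>
           V \<inter> cyl p M y \<delta> = graph (bball p (projp p y) \<delta>) h)"
    using local_graph[OF man eb eta _ M] by blast
  then obtain dl where dl: "\<forall>y\<in>V. dl y > 0 \<and> (\<exists>h. lipK p ?K (bball p (projp p y) (dl y)) h \<and>
           V \<inter> cyl p M y (dl y) = graph (bball p (projp p y) (dl y)) h)"
    by (rule bchoice[THEN exE]) blast
  then obtain hl where hl: "\<forall>y\<in>V. lipK p ?K (bball p (projp p y) (dl y)) (hl y) \<and>
           V \<inter> cyl p M y (dl y) = graph (bball p (projp p y) (dl y)) (hl y)"
    by (metis (no_types, lifting) bchoice)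
  let ?G = "(\<lambda>y. cyl p M y (dl y)) ` (V \<inter> Q)"
  have cover: "V \<inter> Q \<subseteq> \<Union>?G"
  proof
    fix y assume y: "y \<in> V \<inter> Q"
    then have "y \<in> cyl p M y (dl y)" using dl M0 y_in_cyl by blast
    then show "y \<in> \<Union>?G" using y by blast
  qed
  obtain e where e: "e > 0" and eG: "\<And>x. x \<in> V \<inter> Q \<Longrightarrow> \<exists>G \<in> ?G. ball x e \<subseteq> G"
    using Heine_Borel_lemma[OF cpt cover] open_cyl by blast
  define c where "c = sqrt (real CARD('n))"
  have c: "c \<ge> 0" by (simp add: c_def)
  define \<delta> where "\<delta> = e / ((c + 1) * (M + 1))"
  have \<delta>: "\<delta> > 0" using e c M0 by (simp add: \<delta>_def)
  have key: "c * ((M + 1) * \<delta>) < e"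
  proof -
    have "(M + 1) * \<delta> = e / (c + 1)"
      using c M0 by (simp add: \<delta>_def)
    then have "c * ((M + 1) * \<delta>) = e * (c / (c + 1))"
      by simp
    also have "\<dots> < e * 1"
      using c e by (intro mult_strict_left_mono) auto
    finally show ?thesis by simp
  qed
  have cylball: "cyl p M y \<delta> \<subseteq> ball y e" for y :: "(real,'n) vec"
    using cyl_sub_ball[of M \<delta> e p y] key M0 \<delta> unfolding c_def by force
  show ?thesis
  proof (rule exI[of _ \<delta>], intro conjI ballI)
    show "\<delta> > 0" by fact
    fix y assume y: "y \<in> V \<inter> Q"
    obtain ys where ys: "ys \<in> V \<inter> Q" "ball y e \<subseteq> cyl p M ys (dl ys)"
      using eG[OF y] by blast
    define h where "h = hl ys"
    define ds where "ds = dl ys"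
    have hs: "lipK p ?K (bball p (projp p ys) ds) h" "V \<inter> cyl p M ys ds = graph (bball p (projp p ys) ds) h"
      using hl ys(1) by (auto simp: h_def ds_def)
    have sub: "cyl p M y \<delta> \<subseteq> cyl p M ys ds" using cylball ys(2) ds_def by blast
    have "y \<in> cyl p M ys ds" using ys(2) e ds_def by auto
    then have "y \<in> graph (bball p (projp p ys) ds) h" using hs(2) y by blast
    then obtain v where v: "v \<in> bball p (projp p ys) ds" "y = v + h v" unfolding graph_def by blast
    have pv: "projp p y = v" using v hs(1) by (simp add: projp_add lipK_def bball_def)
    have hy: "h (projp p y) = y - projp p y" using v pv by simp
    have ybs: "projp p y \<in> bball p (projp p ys) ds" using v pv by simp
    have bsub: "bball p (projp p y) \<delta> \<subseteq> bball p (projp p ys) ds"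
    proof
      fix u assume u: "u \<in> bball p (projp p y) \<delta>"
      define z where "z = u + (y - projp p y)"
      have pz: "projp p z = u" using u by (simp add: z_def bball_def projp_add)
      have "z \<in> cyl p M y \<delta>" using u pz \<delta> M0 by (simp add: cyl_def bball_def z_def infnorm_0)
      then have "z \<in> cyl p M ys ds" using sub by blast
      then show "u \<in> bball p (projp p ys) ds" using pz u by (simp add: cyl_def bball_def)
    qed
    have lip: "lipK p ?K (bball p (projp p y) \<delta>) h" by (rule lipK_mono[OF hs(1) bsub])
    have "V \<inter> cyl p M y \<delta> = graph (bball p (projp p y) \<delta>) h"
    proof
      show "V \<inter> cyl p M y \<delta> \<subseteq> graph (bball p (projp p y) \<delta>) h"
      proof
        fix z assume z: "z \<in> V \<inter> cyl p M y \<delta>"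
        then have "z \<in> graph (bball p (projp p ys) ds) h" using sub hs(2) by blast
        then obtain w where w: "w \<in> bball p (projp p ys) ds" "z = w + h w" unfolding graph_def by blast
        have pz: "projp p z = w" using w hs(1) by (simp add: projp_add lipK_def bball_def)
        have "w \<in> bball p (projp p y) \<delta>" using z pz w(1) by (simp add: cyl_def bball_def)
        then show "z \<in> graph (bball p (projp p y) \<delta>) h" using w(2) unfolding graph_def by blast
      qed
      show "graph (bball p (projp p y) \<delta>) h \<subseteq> V \<inter> cyl p M y \<delta>"
      proof
        fix z assume "z \<in> graph (bball p (projp p y) \<delta>) h"
        then obtain u where u: "u \<in> bball p (projp p y) \<delta>" "z = u + h u" unfolding graph_def by blast
        have uD: "u \<in> bball p (projp p ys) ds" using u bsub by blast
        then have "u + h u \<in> V" using hs(2) unfolding graph_def by blast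
        moreover have "u + h u \<in> cyl p M y \<delta>"
          by (rule graph_in_cyl[OF hs(1) hy ybs uD u(1) K0 M])
        ultimately show "z \<in> V \<inter> cyl p M y \<delta>" using u by simp
      qed
    qed
    then show "\<exists>h. lipK p ?K (bball p (projp p y) \<delta>) h \<and> V \<inter> cyl p M y \<delta> = graph (bball p (projp p y) \<delta>) h"
      using lip by blast
  qed
qed

lemma lipK_proj0: "lipK p K D h \<Longrightarrow> u \<in> D \<Longrightarrow> projp p (h u) = 0"
  by (simp add: lipK_def)

lemma lipK_le: "lipK p K D h \<Longrightarrow> u \<in> D \<Longrightarrow> v \<in> D \<Longrightarrow> infnorm (h u - h v) \<le> K * infnorm (u - v)"
  by (simp add: lipK_def)

lemma graph_proj:
  assumes "lipK p K D h" "u \<in> D" "projp p u = u"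
  shows "projp p (u + h u) = u"
  using assms by (simp add: projp_add lipK_def)

lemma lift_sheet:
  fixes V Q B :: "(real^'n::{finite,linorder}) set"
  assumes ulg: "\<forall>y\<in>V\<inter>Q. \<exists>h. lipK p K (bball p (projp p y) \<delta>) h \<and> V \<inter> cyl p M y \<delta> = graph (bball p (projp p y) \<delta>) h"
    and \<delta>: "\<delta> > 0" and K: "K \<ge> 0" and M: "M > 2 * K"
    and B: "convex B" "\<And>u. u \<in> B \<Longrightarrow> projp p u = u"
    and R: "\<And>u v. u \<in> B \<Longrightarrow> v \<in> B \<Longrightarrow> infnorm (u - v) \<le> R"
    and y0: "y0 \<in> V" "projp p y0 \<in> B"
    and region: "\<And>u w. u \<in> B \<Longrightarrow> projp p w = 0 \<Longrightarrow> infnorm (w - (y0 - projp p y0)) \<le> K * R \<Longrightarrow> u + w \<in> Q"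
  shows "\<exists>g. lipK p K B g \<and> g (projp p y0) = y0 - projp p y0 \<and> (\<forall>u\<in>B. u + g u \<in> V)"
proof -
  define u0 where "u0 = projp p y0"
  define w0 where "w0 = y0 - projp p y0"
  have M0: "M > 0" using M K by linarith
  have pw0: "projp p w0 = 0" by (simp add: w0_def)
  have R0: "R \<ge> 0" using R[OF y0(2) y0(2)] by (simp add: infnorm_0)
  obtain H where H: "\<forall>y\<in>V\<inter>Q. lipK p K (bball p (projp p y) \<delta>) (H y) \<and> V \<inter> cyl p M y \<delta> = graph (bball p (projp p y) \<delta>) (H y)"
    using bchoice[OF ulg] by blast
  have Hlip: "lipK p K (bball p (projp p y) \<delta>) (H y)" if "y \<in> V \<inter> Q" for y
    using H that by blast
  have Hgr: "V \<inter> cyl p M y \<delta> = graph (bball p (projp p y) \<delta>) (H y)" if "y \<in> V \<inter> Q" for y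
    using H that by blast
  have Hself: "H y (projp p y) = y - projp p y" if yVQ: "y \<in> V \<inter> Q" for y
  proof -
    have "y \<in> cyl p M y \<delta>" using y_in_cyl \<delta> M0 by blast
    then have "y \<in> graph (bball p (projp p y) \<delta>) (H y)" using Hgr[OF yVQ] yVQ by blast
    then obtain v where v: "v \<in> bball p (projp p y) \<delta>" "y = v + H y v" unfolding graph_def by blast
    have "projp p y = v" using graph_proj[OF Hlip[OF yVQ] v(1)] v by (simp add: bball_def)
    then show ?thesis using v(2) by (metis add_diff_cancel_left')
  qed
  have ballself: "projp p y \<in> bball p (projp p y) \<delta>" for y :: "(real,'n) vec"
    using \<delta> by (simp add: bball_def infnorm_0)
  define D where "D r = B \<inter> {u. infnorm (u - u0) \<le> r}" for r
  have convD: "convex (D r)" for r unfolding D_def by (intro convex_Int B(1) convex_infnorm_le)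
  have DB: "D r \<subseteq> B" for r by (auto simp: D_def)
  have u0B: "u0 \<in> B" using y0 u0_def by simp
  have u0D: "u0 \<in> D r" if "r \<ge> 0" for r using u0B that by (simp add: D_def infnorm_0)
  have step: "\<exists>g. lipK p K (D (real k * (\<delta> / 2))) g \<and> g u0 = w0 \<and> (\<forall>u\<in>D (real k * (\<delta> / 2)). u + g u \<in> V)" for k
  proof (induction k)
    case 0
    have D0: "D (real 0 * (\<delta> / 2)) = {u0}"
    proof -
      have "x = u0" if "infnorm (x - u0) \<le> 0" for x
        using that infnorm_pos_le[of "x - u0"] infnorm_eq_0[of "x - u0"] by simp
      then show ?thesis using u0B by (auto simp: D_def infnorm_0)
    qed
    have "lipK p K {u0} (\<lambda>_. w0)" using pw0 K by (simp add: lipK_def infnorm_0)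
    moreover have "u0 + w0 \<in> V" using y0 by (simp add: u0_def w0_def)
    ultimately show ?case using D0 by auto
  next
    case (Suc k)
    define r where "r = real k * (\<delta> / 2)"
    have r0: "r \<ge> 0" using \<delta> by (simp add: r_def)
    have rs: "real (Suc k) * (\<delta> / 2) = r + \<delta> / 2" by (simp add: r_def algebra_simps)
    from Suc.IH obtain g where g: "lipK p K (D r) g" "g u0 = w0" "\<And>u. u \<in> D r \<Longrightarrow> u + g u \<in> V"
      unfolding r_def by blast
    define ret where "ret u = (if infnorm (u - u0) \<le> r then u else u0 + (r / infnorm (u - u0)) *\<^sub>R (u - u0))" for u
    have ret: "ret u \<in> D r \<and> infnorm (u - ret u) \<le> \<delta> / 2" if u: "u \<in> D (r + \<delta> / 2)" for u
    proof (cases "infnorm (u - u0) \<le> r")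
      case True
      then show ?thesis using u \<delta> by (simp add: ret_def D_def infnorm_0)
    next
      case False
      define t where "t = infnorm (u - u0)"
      have tr: "t > r" using False t_def by simp
      have t0: "t > 0" using tr r0 by simp
      have tle: "t \<le> r + \<delta> / 2" using u by (simp add: D_def t_def)
      define l where "l = r / t"
      have l01: "0 \<le> l" "l < 1" using r0 tr t0 by (auto simp: l_def)
      have retu: "ret u = (1 - l) *\<^sub>R u0 + l *\<^sub>R u"
        using False by (simp add: ret_def t_def[symmetric] l_def[symmetric] algebra_simps)
      have uB: "u \<in> B" using u by (simp add: D_def)
      have "ret u \<in> B" using convexD[OF B(1) u0B uB, of "1 - l" l] l01 retu by simp
      moreover have "infnorm (ret u - u0) \<le> r"
      proof -
        have "ret u - u0 = l *\<^sub>R (u - u0)" using retu by (simp add: algebra_simps)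
        then have "infnorm (ret u - u0) = l * t" using l01 by (simp add: infnorm_mul t_def)
        then show ?thesis using t0 by (simp add: l_def)
      qed
      moreover have "infnorm (u - ret u) \<le> \<delta> / 2"
      proof -
        have "u - ret u = (1 - l) *\<^sub>R (u - u0)" using retu by (simp add: algebra_simps)
        then have "infnorm (u - ret u) = (1 - l) * t" using l01 by (simp add: infnorm_mul t_def)
        also have "\<dots> = t - r" using t0 by (simp add: l_def algebra_simps)
        finally show ?thesis using tle by simp
      qed
      ultimately show ?thesis by (simp add: D_def)
    qed
    have retr: "ret u = u" if "u \<in> D r" for u using that by (simp add: ret_def D_def)
    define Y where "Y u = ret u + g (ret u)" for u
    have piY: "projp p (Y u) = ret u" if "u \<in> D (r + \<delta> / 2)" for u
      using graph_proj[OF g(1)] ret[OF that] B(2) DB by (auto simp: Y_def)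
    have YVQ: "Y u \<in> V \<inter> Q" if u: "u \<in> D (r + \<delta> / 2)" for u
    proof
      show "Y u \<in> V" using g(3) ret[OF u] by (simp add: Y_def)
      have rB: "ret u \<in> B" using ret[OF u] DB by blast
      have "infnorm (g (ret u) - w0) = infnorm (g (ret u) - g u0)" using g(2) by simp
      also have "\<dots> \<le> K * infnorm (ret u - u0)" using lipK_le[OF g(1)] ret[OF u] u0D[OF r0] by blast
      also have "\<dots> \<le> K * R" using K R[OF rB u0B] by (intro mult_left_mono) auto
      finally show "Y u \<in> Q" unfolding Y_def
        using region[OF rB lipK_proj0[OF g(1)]] ret[OF u] w0_def u0_def by auto
    qed
    have HY: "H (Y u) (ret u) = g (ret u)" if "u \<in> D (r + \<delta> / 2)" for u
      using Hself[OF YVQ[OF that]] piY[OF that] by (simp add: Y_def)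
    define g' where "g' u = H (Y u) u" for u
    have pu: "projp p u = u" if "u \<in> D (r + \<delta> / 2)" for u using that B(2) DB by blast
    have inbb: "u2 \<in> bball p (projp p (Y u1)) \<delta>"
      if u1: "u1 \<in> D (r + \<delta> / 2)" and u2: "u2 \<in> D (r + \<delta> / 2)" and d: "infnorm (u1 - u2) < \<delta> / 4" for u1 u2
    proof -
      have "infnorm (u2 - ret u1) \<le> infnorm (u2 - u1) + infnorm (u1 - ret u1)"
        using infnorm_triangle[of "u2 - u1" "u1 - ret u1"] by simp
      also have "\<dots> < \<delta>" using d ret[OF u1] infnorm_sub[of u2 u1] \<delta> by linarith
      finally show ?thesis using piY[OF u1] pu[OF u2] by (simp add: bball_def)
    qed
    have agree: "g' u2 = H (Y u1) u2"
      if u1: "u1 \<in> D (r + \<delta> / 2)" and u2: "u2 \<in> D (r + \<delta> / 2)" and d: "infnorm (u1 - u2) < \<delta> / 4" for u1 u2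
    proof -
      define z where "z = u2 + g' u2"
      have b22: "u2 \<in> bball p (projp p (Y u2)) \<delta>" using inbb[OF u2 u2] \<delta> by (simp add: infnorm_0)
      have b12: "u2 \<in> bball p (projp p (Y u1)) \<delta>" by (rule inbb[OF u1 u2 d])
      have zV: "z \<in> V" using Hgr[OF YVQ[OF u2]] b22 unfolding z_def g'_def graph_def by blast
      have pz: "projp p z = u2" using graph_proj[OF Hlip[OF YVQ[OF u2]] b22 pu[OF u2]] by (simp add: z_def g'_def)
      have r2b: "ret u2 \<in> bball p (projp p (Y u2)) \<delta>" using piY[OF u2] ballself by metis
      have "infnorm (g' u2 - g (ret u1)) \<le> infnorm (g' u2 - g (ret u2)) + infnorm (g (ret u2) - g (ret u1))"
        using infnorm_triangle[of "g' u2 - g (ret u2)" "g (ret u2) - g (ret u1)"] by simp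
      also have "infnorm (g' u2 - g (ret u2)) \<le> K * infnorm (u2 - ret u2)"
        using lipK_le[OF Hlip[OF YVQ[OF u2]] b22 r2b] HY[OF u2] by (simp add: g'_def)
      also have "infnorm (g (ret u2) - g (ret u1)) \<le> K * infnorm (ret u2 - ret u1)"
        using lipK_le[OF g(1)] ret[OF u1] ret[OF u2] by blast
      also have "K * infnorm (u2 - ret u2) + K * infnorm (ret u2 - ret u1) \<le> K * (\<delta> / 2) + K * (5 * \<delta> / 4)"
      proof -
        have a: "infnorm (u2 - ret u2) \<le> \<delta> / 2" using ret[OF u2] by blast
        have "infnorm (ret u2 - ret u1) \<le> infnorm (ret u2 - u2) + infnorm (u2 - ret u1)"
          using infnorm_triangle[of "ret u2 - u2" "u2 - ret u1"] by simp
        also have "infnorm (u2 - ret u1) \<le> infnorm (u2 - u1) + infnorm (u1 - ret u1)"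
          using infnorm_triangle[of "u2 - u1" "u1 - ret u1"] by simp
        finally have "infnorm (ret u2 - ret u1) \<le> 5 * \<delta> / 4"
          using ret[OF u1] ret[OF u2] d infnorm_sub[of u2 u1] infnorm_sub[of "ret u2" u2] by linarith
        then show ?thesis using a K by (intro add_mono mult_left_mono) auto
      qed
      also have "K * (\<delta> / 2) + K * (5 * \<delta> / 4) < M * \<delta>"
      proof -
        have "K * (\<delta> / 2) + K * (5 * \<delta> / 4) \<le> 2 * K * \<delta>" using K \<delta> by (simp add: algebra_simps)
        also have "\<dots> < M * \<delta>" using M \<delta> by simp
        finally show ?thesis .
      qed
      finally have fib: "infnorm (g' u2 - g (ret u1)) < M * \<delta>" by simp
      have "z \<in> cyl p M (Y u1) \<delta>"
      proof -
        have "z - projp p z = g' u2" using pz by (simp add: z_def)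
        moreover have "Y u1 - projp p (Y u1) = g (ret u1)" using piY[OF u1] by (simp add: Y_def)
        ultimately show ?thesis using fib b12 pz by (simp add: cyl_def bball_def)
      qed
      then have "z \<in> graph (bball p (projp p (Y u1)) \<delta>) (H (Y u1))"
        using Hgr[OF YVQ[OF u1]] zV by blast
      then obtain v where v: "v \<in> bball p (projp p (Y u1)) \<delta>" "z = v + H (Y u1) v"
        unfolding graph_def by blast
      have "projp p z = v" using graph_proj[OF Hlip[OF YVQ[OF u1]] v(1)] v by (simp add: bball_def)
      then have "v = u2" using pz by simp
      then show ?thesis using v(2) by (simp add: z_def)
    qed
    have lipg': "lipK p K (D (r + \<delta> / 2)) g'"
      unfolding lipK_def
    proof (intro conjI ballI)
      fix u assume u: "u \<in> D (r + \<delta> / 2)"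
      show "projp p (g' u) = 0"
        using lipK_proj0[OF Hlip[OF YVQ[OF u]] inbb[OF u u]] \<delta> by (simp add: g'_def infnorm_0)
    next
      fix a b assume a: "a \<in> D (r + \<delta> / 2)" and b: "b \<in> D (r + \<delta> / 2)"
      show "infnorm (g' a - g' b) \<le> K * infnorm (a - b)"
      proof (rule local_lip_global[OF convD _ K _ a b])
        show "\<delta> / 4 > 0" using \<delta> by simp
        fix u1 u2 assume u1: "u1 \<in> D (r + \<delta> / 2)" and u2: "u2 \<in> D (r + \<delta> / 2)" and d: "infnorm (u1 - u2) < \<delta> / 4"
        have "g' u2 = H (Y u1) u2" by (rule agree[OF u1 u2 d])
        moreover have "u1 \<in> bball p (projp p (Y u1)) \<delta>" using inbb[OF u1 u1] \<delta> by (simp add: infnorm_0)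
        moreover have "u2 \<in> bball p (projp p (Y u1)) \<delta>" by (rule inbb[OF u1 u2 d])
        ultimately show "infnorm (g' u1 - g' u2) \<le> K * infnorm (u1 - u2)"
          using lipK_le[OF Hlip[OF YVQ[OF u1]]] by (simp add: g'_def)
      qed
    qed
    have "g' u0 = w0"
    proof -
      have u0D': "u0 \<in> D (r + \<delta> / 2)" using u0D \<delta> r0 by simp
      have "ret u0 = u0" using retr u0D[OF r0] by blast
      then show ?thesis using HY[OF u0D'] g(2) by (simp add: g'_def)
    qed
    moreover have "u + g' u \<in> V" if u: "u \<in> D (r + \<delta> / 2)" for u
    proof -
      have "u \<in> bball p (projp p (Y u)) \<delta>" using inbb[OF u u] \<delta> by (simp add: infnorm_0)
      then have "u + g' u \<in> graph (bball p (projp p (Y u)) \<delta>) (H (Y u))"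
        unfolding graph_def g'_def by blast
      then show ?thesis using Hgr[OF YVQ[OF u]] by blast
    qed
    ultimately show ?case unfolding rs using lipg' by blast
  qed
  obtain k :: nat where k: "R / (\<delta> / 2) \<le> real k" using real_arch_simple by blast
  have "R \<le> real k * (\<delta> / 2)" using k \<delta> by (simp add: field_simps)
  then have "D (real k * (\<delta> / 2)) = B"
    using R u0B by (force simp: D_def)
  then show ?thesis using step[of k] by (auto simp: u0_def w0_def)
qed

lemma sheet_component:
  fixes V Q B \<Omega> :: "(real^'n::{finite,linorder}) set"
  assumes ulg: "\<forall>y\<in>V\<inter>Q. \<exists>h. lipK p K (bball p (projp p y) \<delta>) h \<and> V \<inter> cyl p M y \<delta> = graph (bball p (projp p y) \<delta>) h"
    and \<delta>: "\<delta> > 0" and K: "K \<ge> 0" and M: "M > K"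
    and B: "connected B" "\<And>u. u \<in> B \<Longrightarrow> projp p u = u"
    and g: "lipK p K B g" "\<And>u. u \<in> B \<Longrightarrow> u + g u \<in> V"
    and \<Omega>sub: "\<Omega> \<subseteq> Q" "\<And>z. z \<in> \<Omega> \<Longrightarrow> projp p z \<in> B" and g\<Omega>: "\<And>u. u \<in> B \<Longrightarrow> u + g u \<in> \<Omega>"
    and y0: "y0 \<in> graph B g"
  shows "connected_component_set (V \<inter> \<Omega>) y0 = graph B g"
proof -
  let ?S = "V \<inter> \<Omega>"
  let ?Gr = "graph B g"
  have M0: "M > 0" using M K by linarith
  have Gr_img: "?Gr = (\<lambda>u. u + g u) ` B" unfolding graph_def by auto
  have contg: "continuous_on B g" by (rule lipK_continuous_on[OF g(1) K])
  have "continuous_on B (\<lambda>u. u + g u)" by (intro continuous_intros contg)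
  then have conn: "connected ?Gr" unfolding Gr_img using B(1) connected_continuous_image by blast
  have GrS: "?Gr \<subseteq> ?S" unfolding Gr_img using g(2) g\<Omega> by blast
  have Grz: "projp p z \<in> B \<and> g (projp p z) = z - projp p z" if zG: "z \<in> ?Gr" for z
  proof -
    obtain u where u: "u \<in> B" "z = u + g u" using zG unfolding graph_def by blast
    have "projp p z = u" using graph_proj[OF g(1) u(1) B(2)[OF u(1)]] u by simp
    then show ?thesis using u by simp
  qed
  have y0S: "y0 \<in> ?S" using y0 GrS by blast
  show ?thesis
  proof
    show "?Gr \<subseteq> connected_component_set ?S y0"
      by (rule connected_component_maximal[OF y0 conn GrS])
    define A where "A = \<Union>((\<lambda>z. cyl p M z \<delta>) ` ?Gr)"
    have oA: "open A" unfolding A_def using open_cyl by blast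
    have SA: "?S \<inter> A = ?Gr"
    proof
      show "?Gr \<subseteq> ?S \<inter> A"
      proof
        fix z assume z: "z \<in> ?Gr"
        have "z \<in> cyl p M z \<delta>" using y_in_cyl \<delta> M0 by blast
        then show "z \<in> ?S \<inter> A" using z GrS unfolding A_def by blast
      qed
      show "?S \<inter> A \<subseteq> ?Gr"
      proof
        fix w assume w: "w \<in> ?S \<inter> A"
        then obtain z where z: "z \<in> ?Gr" "w \<in> cyl p M z \<delta>" unfolding A_def by blast
        have zVQ: "z \<in> V \<inter> Q" using z GrS \<Omega>sub(1) by blast
        obtain h where h: "lipK p K (bball p (projp p z) \<delta>) h" "V \<inter> cyl p M z \<delta> = graph (bball p (projp p z) \<delta>) h"
          using ulg zVQ by blast
        have "w \<in> graph (bball p (projp p z) \<delta>) h" using h(2) w z(2) by blast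
        then obtain v where v: "v \<in> bball p (projp p z) \<delta>" "w = v + h v" unfolding graph_def by blast
        have pw: "projp p w = v" using graph_proj[OF h(1) v(1)] v by (simp add: bball_def)
        have vB: "v \<in> B" using \<Omega>sub(2) w pw by blast
        have "v + g v \<in> cyl p M z \<delta>"
          by (rule graph_in_cyl[OF g(1) conjunct2[OF Grz[OF z(1)]] conjunct1[OF Grz[OF z(1)]] vB v(1) K M])
        then have "v + g v \<in> graph (bball p (projp p z) \<delta>) h" using h(2) g(2)[OF vB] by blast
        then obtain v' where v': "v' \<in> bball p (projp p z) \<delta>" "v + g v = v' + h v'" unfolding graph_def by blast
        have "projp p (v + g v) = v" using graph_proj[OF g(1) vB B(2)[OF vB]] .
        moreover have "projp p (v' + h v') = v'" using graph_proj[OF h(1) v'(1)] v'(1) by (simp add: bball_def)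
        ultimately have "v' = v" using v'(2) by simp
        then have "g v = h v" using v'(2) by simp
        then have "w = v + g v" using v(2) by simp
        then show "w \<in> ?Gr" using vB unfolding graph_def by blast
      qed
    qed
    have contf: "continuous_on ?S (\<lambda>w. (w - projp p w) - g (projp p w))"
    proof (intro continuous_intros)
      show "continuous_on ?S (\<lambda>w. g (projp p w))"
        by (rule continuous_on_compose2[OF contg]) (auto intro!: continuous_intros simp: \<Omega>sub(2))
    qed
    have "closedin (top_of_set ?S) {w \<in> ?S. (w - projp p w) - g (projp p w) = 0}"
      by (rule continuous_closedin_preimage_constant[OF contf])
    moreover have "{w \<in> ?S. (w - projp p w) - g (projp p w) = 0} = ?Gr"
    proof
      show "{w \<in> ?S. (w - projp p w) - g (projp p w) = 0} \<subseteq> ?Gr"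
      proof
        fix w assume w: "w \<in> {w \<in> ?S. (w - projp p w) - g (projp p w) = 0}"
        then have "w = projp p w + g (projp p w)" by (simp add: algebra_simps)
        moreover have "projp p w \<in> B" using w \<Omega>sub(2) by blast
        ultimately show "w \<in> ?Gr" unfolding graph_def by blast
      qed
      show "?Gr \<subseteq> {w \<in> ?S. (w - projp p w) - g (projp p w) = 0}"
        using Grz GrS by auto
    qed
    ultimately obtain F where F: "closed F" "?Gr = ?S \<inter> F" by (auto simp: closedin_closed)
    define Cc where "Cc = connected_component_set ?S y0"
    have CcS: "Cc \<subseteq> ?S" unfolding Cc_def by (rule connected_component_subset)
    have Ccconn: "connected Cc" unfolding Cc_def by (rule connected_connected_component)
    have y0C: "y0 \<in> Cc" unfolding Cc_def using y0S by (simp add: connected_component_refl_eq)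
    have T1: "Cc \<inter> A = Cc \<inter> ?Gr" using SA CcS by blast
    have T2: "Cc \<inter> F = Cc \<inter> ?Gr" using F(2) CcS by blast
    have "openin (top_of_set Cc) (Cc \<inter> ?Gr)" using openin_open_Int[OF oA, of Cc] T1 by simp
    moreover have "closedin (top_of_set Cc) (Cc \<inter> ?Gr)" using closedin_closed_Int[OF F(1), of Cc] T2 by simp
    ultimately have "Cc \<inter> ?Gr = {} \<or> Cc \<inter> ?Gr = Cc" using Ccconn unfolding connected_clopen by blast
    moreover have "y0 \<in> Cc \<inter> ?Gr" using y0C y0 by blast
    ultimately have "Cc \<subseteq> ?Gr" by blast
    then show "connected_component_set ?S y0 \<subseteq> ?Gr" unfolding Cc_def .
  qed
qed

lemma enum_onto:
  assumes "finite A" "A \<noteq> {}" "card A \<le> \<nu>"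
  shows "\<exists>e. e ` {1..\<nu>} = A"
proof -
  obtain f where f: "bij_betw f {0..<card A} A" using ex_bij_betw_nat_finite[OF assms(1)] by blast
  have c: "card A > 0" using assms by (simp add: card_gt_0_iff)
  define e where "e k = f (min (k - 1) (card A - 1))" for k
  have "e ` {1..\<nu>} = A"
  proof
    show "e ` {1..\<nu>} \<subseteq> A"
    proof
      fix a assume "a \<in> e ` {1..\<nu>}"
      then obtain k where "a = e k" by blast
      moreover have "min (k - 1) (card A - 1) \<in> {0..<card A}" using c by auto
      ultimately show "a \<in> A" using f unfolding e_def bij_betw_def by blast
    qed
    show "A \<subseteq> e ` {1..\<nu>}"
    proof
      fix a assume "a \<in> A"
      then obtain j where j: "j \<in> {0..<card A}" "a = f j" using f unfolding bij_betw_def by blast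
      have "e (Suc j) = a" using j by (simp add: e_def)
      moreover have "Suc j \<in> {1..\<nu>}" using j assms(3) by auto
      ultimately show "a \<in> e ` {1..\<nu>}" by blast
    qed
  qed
  then show ?thesis by blast
qed

lemma infdist_lessE:
  assumes "A \<noteq> {}" "infdist x A < e"
  shows "\<exists>a\<in>A. dist x a < e"
proof -
  have "bdd_below ((\<lambda>a. dist x a) ` A)" by (rule bdd_belowI[of _ 0]) auto
  then show ?thesis using assms unfolding infdist_def by (simp add: cINF_less_iff)
qed

lemma hd_le1:
  fixes S T :: "'a::metric_space set"
  assumes "bounded S" "T \<noteq> {}" "a \<in> S"
  shows "infdist a T \<le> hdist S T"
proof -
  obtain t0 where t0: "t0 \<in> T" using assms by blast
  obtain e where e: "\<And>s. s \<in> S \<Longrightarrow> dist t0 s \<le> e" using assms(1) bounded_any_center[of S t0] by blast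
  have "bdd_above ((\<lambda>a. infdist a T) ` S)"
  proof (rule bdd_aboveI[of _ e])
    fix y assume "y \<in> (\<lambda>a. infdist a T) ` S"
    then obtain s where s: "s \<in> S" "y = infdist s T" by blast
    have "infdist s T \<le> dist s t0" using infdist_le t0 by blast
    then show "y \<le> e" using e[OF s(1)] s by (simp add: dist_commute)
  qed
  then have "infdist a T \<le> (SUP a\<in>S. infdist a T)" by (rule cSUP_upper[OF assms(3)])
  then show ?thesis unfolding hdist_def by simp
qed

lemma hd_le2:
  fixes S T :: "'a::metric_space set"
  assumes "bounded T" "S \<noteq> {}" "b \<in> T"
  shows "infdist b S \<le> hdist S T"
proof -
  obtain s0 where s0: "s0 \<in> S" using assms by blast
  obtain e where e: "\<And>t. t \<in> T \<Longrightarrow> dist s0 t \<le> e" using assms(1) bounded_any_center[of T s0] by blast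
  have "bdd_above ((\<lambda>b. infdist b S) ` T)"
  proof (rule bdd_aboveI[of _ e])
    fix y assume "y \<in> (\<lambda>b. infdist b S) ` T"
    then obtain t where t: "t \<in> T" "y = infdist t S" by blast
    have "infdist t S \<le> dist t s0" using infdist_le s0 by blast
    then show "y \<le> e" using e[OF t(1)] t by (simp add: dist_commute)
  qed
  then have "infdist b S \<le> (SUP b\<in>T. infdist b S)" by (rule cSUP_upper[OF assms(3)])
  then show ?thesis unfolding hdist_def by simp
qed

lemma hlim_nonempty:
  assumes "hlim A C" "C \<noteq> {}"
  shows "(\<forall>i. bounded (A i)) \<and> compact C \<and> (\<forall>\<^sub>F i in sequentially. A i \<noteq> {}) \<and>
         (\<lambda>i. hdist (closure (A i)) C) \<longlonglongrightarrow> 0"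
  using assms unfolding hlim_def by blast

lemma hlim_approx:
  fixes A :: "nat \<Rightarrow> ('a::metric_space) set"
  assumes h: "hlim A C" and z: "z \<in> C" and e: "e > 0"
  shows "\<exists>N. \<forall>i\<ge>N. \<exists>a\<in>A i. dist a z < e"
proof -
  have Cne: "C \<noteq> {}" using z by blast
  from hlim_nonempty[OF h Cne] have bd: "\<And>i. bounded (A i)" and cC: "compact C"
    and ne: "\<forall>\<^sub>F i in sequentially. A i \<noteq> {}" and lim: "(\<lambda>i. hdist (closure (A i)) C) \<longlonglongrightarrow> 0"
    by auto
  have "\<forall>\<^sub>F i in sequentially. hdist (closure (A i)) C < e / 2"
    by (rule order_tendstoD(2)[OF lim]) (use e in simp)
  with ne have "\<forall>\<^sub>F i in sequentially. A i \<noteq> {} \<and> hdist (closure (A i)) C < e / 2"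
    by (rule eventually_conj)
  then obtain N where N: "\<And>i. i \<ge> N \<Longrightarrow> A i \<noteq> {} \<and> hdist (closure (A i)) C < e / 2"
    unfolding eventually_sequentially by blast
  show ?thesis
  proof (intro exI allI impI)
    fix i assume i: "i \<ge> N"
    have Ane: "A i \<noteq> {}" and hd: "hdist (closure (A i)) C < e / 2" using N[OF i] by auto
    have "infdist z (closure (A i)) \<le> hdist (closure (A i)) C"
      by (rule hd_le2[OF compact_imp_bounded[OF cC] _ z]) (use Ane in simp)
    then have "infdist z (closure (A i)) < e / 2" using hd by linarith
    moreover have "closure (A i) \<noteq> {}" using Ane by simp
    ultimately obtain a where a: "a \<in> closure (A i)" "dist z a < e / 2"
      using infdist_lessE by blast
    have "\<forall>\<epsilon>>0. \<exists>y\<in>A i. dist y a < \<epsilon>" using a(1) unfolding closure_approachable by simp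
    then have "\<exists>y\<in>A i. dist y a < e / 2" using e by (meson half_gt_zero)
    then obtain a' where a': "a' \<in> A i" "dist a' a < e / 2" by blast
    have "dist a' z \<le> dist a' a + dist a z" by (rule dist_triangle)
    also have "\<dots> < e" using a a' by (simp add: dist_commute)
    finally show "\<exists>a\<in>A i. dist a z < e" using a' by blast
  qed
qed

lemma hlim_limit:
  fixes A :: "nat \<Rightarrow> ('a::metric_space) set"
  assumes h: "hlim A C" and s: "strict_mono s" and zA: "\<And>n. z n \<in> A (s n)" and lim: "z \<longlonglongrightarrow> l"
  shows "l \<in> C"
proof (cases "C = {}")
  case True
  then have "\<forall>\<^sub>F i in sequentially. A i = {}" using h unfolding hlim_def by auto
  then obtain N where "\<And>i. i \<ge> N \<Longrightarrow> A i = {}" unfolding eventually_sequentially by blast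
  then have "A (s N) = {}" using seq_suble[OF s, of N] by simp
  then show ?thesis using zA[of N] by simp
next
  case Cne: False
  from hlim_nonempty[OF h Cne] have bd: "\<And>i. bounded (A i)" and cC: "compact C"
    and hl: "(\<lambda>i. hdist (closure (A i)) C) \<longlonglongrightarrow> 0"
    by auto
  have le: "infdist (z n) C \<le> hdist (closure (A (s n))) C" for n
    by (rule hd_le1[OF bounded_closure[OF bd] Cne]) (use zA closure_subset in blast)
  have "(\<lambda>n. hdist (closure (A (s n))) C) \<longlonglongrightarrow> 0"
    using LIMSEQ_subseq_LIMSEQ[OF hl s] by (simp add: o_def)
  moreover have "(\<lambda>n. infdist (z n) C) \<longlonglongrightarrow> infdist l C" by (intro tendsto_intros lim)
  ultimately have "infdist l C \<le> 0"
    using le by (intro LIMSEQ_le[of "\<lambda>n. infdist (z n) C" _ "\<lambda>n. hdist (closure (A (s n))) C"]) auto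
  then have "infdist l C = 0" using infdist_nonneg[of l C] by linarith
  then have "l \<in> closure C" using in_closure_iff_infdist_zero[OF Cne] by simp
  then show ?thesis using closure_closed[OF compact_imp_closed[OF cC]] by simp
qed

lemma hlim_frontier:
  fixes V :: "nat \<Rightarrow> ('a::metric_space) set"
  assumes h: "hlim (\<lambda>i. fr (V i)) D" and x: "x \<notin> D"
  shows "\<exists>r>0. \<exists>N. \<forall>i\<ge>N. fr (V i) \<inter> ball x r = {}"
proof (cases "D = {}")
  case True
  then have "\<forall>\<^sub>F i in sequentially. fr (V i) = {}" using h unfolding hlim_def by auto
  then obtain N where "\<And>i. i \<ge> N \<Longrightarrow> fr (V i) = {}" unfolding eventually_sequentially by blast
  then show ?thesis by (intro exI[of _ 1]) auto
next
  case Dne: False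
  from hlim_nonempty[OF h Dne] have bd: "\<And>i. bounded (fr (V i))" and cD: "compact D"
    and hl: "(\<lambda>i. hdist (closure (fr (V i))) D) \<longlonglongrightarrow> 0"
    by auto
  define d where "d = infdist x D"
  have d: "d > 0" unfolding d_def by (rule infdist_pos_not_in_closed[OF compact_imp_closed[OF cD] Dne x])
  have "\<forall>\<^sub>F i in sequentially. hdist (closure (fr (V i))) D < d / 2"
    by (rule order_tendstoD(2)[OF hl]) (use d in simp)
  then obtain N where N: "\<And>i. i \<ge> N \<Longrightarrow> hdist (closure (fr (V i))) D < d / 2"
    unfolding eventually_sequentially by blast
  show ?thesis
  proof (intro exI conjI allI impI)
    show "d / 2 > 0" using d by simp
    fix i assume i: "i \<ge> N"
    show "fr (V i) \<inter> ball x (d / 2) = {}"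
    proof (rule ccontr)
      assume "fr (V i) \<inter> ball x (d / 2) \<noteq> {}"
      then obtain a where a: "a \<in> fr (V i)" "dist x a < d / 2" by auto
      have "infdist a D \<le> hdist (closure (fr (V i))) D"
        by (rule hd_le1[OF bounded_closure[OF bd] Dne]) (use a closure_subset in blast)
      then have "infdist a D < d / 2" using N[OF i] by linarith
      moreover have "infdist x D \<le> infdist a D + dist x a" by (rule infdist_triangle)
      ultimately show False using a(2) d_def by linarith
    qed
  qed
qed

definition ebox :: "nat \<Rightarrow> (real,'n) vec \<Rightarrow> real \<Rightarrow> real \<Rightarrow> ((real,'n::{finite,linorder}) vec) set" where
  "ebox p x w H = box (x - (\<chi> i. if i \<in> firstp p then w else H)) (x + (\<chi> i. if i \<in> firstp p then w else H))"

lemma mem_ebox: "z \<in> ebox p x w H \<longleftrightarrow> (\<forall>i. \<bar>z$i - x$i\<bar> < (if i \<in> firstp p then w else H))"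
  unfolding ebox_def mem_box_cart by (auto simp: abs_less_iff algebra_simps)

lemma ebox_iff:
  assumes "w > 0" "H > 0"
  shows "z \<in> ebox p x w H \<longleftrightarrow> infnorm (projp p z - projp p x) < w \<and> infnorm ((z - projp p z) - (x - projp p x)) < H"
  unfolding mem_ebox infnorm_less_cart_iff using assms by (auto split: if_splits)

lemma x_in_ebox: "w > 0 \<Longrightarrow> H > 0 \<Longrightarrow> x \<in> ebox p x w H"
  by (simp add: ebox_iff infnorm_0)

lemma open_ebox: "open (ebox p x w H)"
  by (simp add: ebox_def open_box)

lemma proj_ebox:
  assumes "w > 0" "H > 0"
  shows "projp p ` ebox p x w H = bball p (projp p x) w"
proof
  show "projp p ` ebox p x w H \<subseteq> bball p (projp p x) w"
    using assms by (auto simp: ebox_iff bball_def)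
  show "bball p (projp p x) w \<subseteq> projp p ` ebox p x w H"
  proof
    fix u assume u: "u \<in> bball p (projp p x) w"
    define z where "z = u + (x - projp p x)"
    have pz: "projp p z = u" using u by (simp add: z_def bball_def projp_add)
    have "z \<in> ebox p x w H" using u pz assms by (simp add: ebox_iff bball_def z_def infnorm_0)
    then show "u \<in> projp p ` ebox p x w H" using pz by (metis image_eqI)
  qed
qed

lemma sheets_exist:
  fixes V :: "(real^'n::{finite,linorder}) set" and x :: "(real,'n) vec"
  assumes man: "C1_submanifold p V" and eb: "eta_bounded p \<eta> V" and eta: "\<eta> \<ge> 0"
    and cpt: "compact (V \<inter> {z. infnorm (z - x) \<le> r})"
    and w: "w > 0" "w \<le> r" and H: "H > 0" "H \<le> r" and wH: "6 * (real p * \<eta>) * w < H"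
    and comps: "finite (components (V \<inter> ebox p x w H))" "card (components (V \<inter> ebox p x w H)) \<le> \<nu>"
    and ne: "V \<inter> ebox p x (w/2) (H/3) \<noteq> {}"
  shows "\<exists>G. (\<forall>k\<in>{1..\<nu>}. lipK p (real p * \<eta>) (bball p (projp p x) w) (G k) \<and>
                (\<forall>u\<in>bball p (projp p x) w. u + G k u \<in> V \<and> infnorm (G k u - (x - projp p x)) < H)) \<and>
             V \<inter> ebox p x (w/2) (H/3) \<subseteq> (\<Union>k\<in>{1..\<nu>}. graph (bball p (projp p x) w) (G k))"
proof -
  define K where "K = real p * \<eta>"
  define M where "M = 2 * K + 1"
  define Q where "Q = {z. infnorm (z - x) \<le> r}"
  define B where "B = bball p (projp p x) w"
  define \<Omega> where "\<Omega> = ebox p x w H"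
  define U where "U = ebox p x (w/2) (H/3)"
  have K0: "K \<ge> 0" using eta by (simp add: K_def)
  have MK: "M > K" "M > 2 * K" using K0 by (auto simp: M_def)
  have kw: "K * (2 * w) < H / 3" using wH by (simp add: K_def)
  have KM: "M > real p * \<eta>" using MK K_def by simp
  obtain \<delta> where \<delta>: "\<delta> > 0" and ulg: "\<forall>y\<in>V\<inter>Q. \<exists>h. lipK p K (bball p (projp p y) \<delta>) h \<and>
           V \<inter> cyl p M y \<delta> = graph (bball p (projp p y) \<delta>) h"
    using uniform_local_graph[OF man eb eta KM cpt[folded Q_def]] K_def by blast
  have \<Omega>Q: "\<Omega> \<subseteq> Q"
  proof
    fix z assume z: "z \<in> \<Omega>"
    have a: "infnorm (projp p (z - x)) < w" and b: "infnorm ((z - x) - projp p (z - x)) < H"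
      using z w H by (auto simp: \<Omega>_def ebox_iff projp_diff algebra_simps)
    show "z \<in> Q" using infnorm_split_le[of "z - x" p] a b w H by (simp add: Q_def)
  qed
  have \<Omega>B: "projp p z \<in> B" if "z \<in> \<Omega>" for z
    using that w H by (simp add: \<Omega>_def B_def ebox_iff bball_def)
  have U\<Omega>: "U \<subseteq> \<Omega>" using w H by (auto simp: U_def \<Omega>_def ebox_iff)
  have Bp: "projp p u = u" if "u \<in> B" for u using that by (simp add: B_def bball_def)
  have BR: "infnorm (u - v) \<le> 2 * w" if "u \<in> B" "v \<in> B" for u v
  proof -
    have "infnorm (u - v) \<le> infnorm (u - projp p x) + infnorm (projp p x - v)"
      using infnorm_triangle[of "u - projp p x" "projp p x - v"] by simp
    then show ?thesis using that infnorm_sub[of v "projp p x"] by (simp add: B_def bball_def)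
  qed
  have sheet: "\<exists>g. lipK p K B g \<and> (\<forall>u\<in>B. u + g u \<in> V \<and> infnorm (g u - (x - projp p x)) < H) \<and>
        connected_component_set (V \<inter> \<Omega>) y = graph B g" if y: "y \<in> V \<inter> U" for y
  proof -
    have y1: "infnorm (projp p y - projp p x) < w / 2" and y2: "infnorm ((y - projp p y) - (x - projp p x)) < H / 3"
      using y w H by (auto simp: U_def ebox_iff)
    have yB: "projp p y \<in> B" using y1 w by (simp add: B_def bball_def)
    have region: "u + w' \<in> Q" if u: "u \<in> B" and pw: "projp p w' = 0"
      and d: "infnorm (w' - (y - projp p y)) \<le> K * (2 * w)" for u w'
    proof -
      have pu: "projp p u = u" using Bp u by blast
      have a: "infnorm (projp p (u + w' - x)) < r"
        using u pu pw w by (simp add: projp_add projp_diff B_def bball_def)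
      have "u + w' - x - projp p (u + w' - x) = (w' - (y - projp p y)) + ((y - projp p y) - (x - projp p x))"
        using pu pw by (simp add: projp_add projp_diff algebra_simps)
      then have "infnorm (u + w' - x - projp p (u + w' - x)) \<le> infnorm (w' - (y - projp p y)) + infnorm ((y - projp p y) - (x - projp p x))"
        using infnorm_triangle by metis
      also have "\<dots> < K * (2 * w) + H / 3" using d y2 by linarith
      also have "\<dots> \<le> r" using kw H by linarith
      finally have b: "infnorm (u + w' - x - projp p (u + w' - x)) < r" .
      show ?thesis using infnorm_split_le[of "u + w' - x" p] a b by (simp add: Q_def)
    qed
    obtain g where g: "lipK p K B g" "g (projp p y) = y - projp p y" "\<forall>u\<in>B. u + g u \<in> V"
      using lift_sheet[OF ulg \<delta> K0 MK(2) convex_bball[of p "projp p x" w, folded B_def] Bp BR _ yB region]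
        y by blast
    have band: "infnorm (g u - (x - projp p x)) < H" if u: "u \<in> B" for u
    proof -
      have "g u - (x - projp p x) = (g u - g (projp p y)) + ((y - projp p y) - (x - projp p x))"
        using g(2) by simp
      then have A: "infnorm (g u - (x - projp p x)) \<le> infnorm (g u - g (projp p y)) + infnorm ((y - projp p y) - (x - projp p x))"
        using infnorm_triangle by metis
      have B: "infnorm (g u - g (projp p y)) \<le> K * infnorm (u - projp p y)"
        using lipK_le[OF g(1) u yB] .
      have C: "K * infnorm (u - projp p y) \<le> K * (2 * w)" using BR[OF u yB] K0 by (intro mult_left_mono)
      show ?thesis using A B C y2 kw H by linarith
    qed
    have g\<Omega>: "u + g u \<in> \<Omega>" if u: "u \<in> B" for u
    proof -
      have "projp p (u + g u) = u" by (rule graph_proj[OF g(1) u Bp[OF u]])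
      then show ?thesis using u band[OF u] w H by (simp add: \<Omega>_def ebox_iff B_def bball_def)
    qed
    have yg: "y \<in> graph B g" unfolding graph_def using yB g(2) by (metis (mono_tags, lifting) add_diff_cancel_left' add_diff_eq mem_Collect_eq)
    have gV: "\<And>u. u \<in> B \<Longrightarrow> u + g u \<in> V" using g(3) by blast
    have "connected_component_set (V \<inter> \<Omega>) y = graph B g"
      by (rule sheet_component[OF ulg \<delta> K0 MK(1) convex_connected[OF convex_bball[of p "projp p x" w, folded B_def]]
            Bp g(1) gV \<Omega>Q \<Omega>B g\<Omega> yg])
    then show ?thesis using g band by blast
  qed
  define Sh where "Sh = (\<lambda>y. connected_component_set (V \<inter> \<Omega>) y) ` (V \<inter> U)"
  have Shc: "Sh \<subseteq> components (V \<inter> \<Omega>)"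
    unfolding Sh_def components_def using U\<Omega> by blast
  have fSh: "finite Sh" using comps(1) Shc \<Omega>_def finite_subset by blast
  have cSh: "card Sh \<le> \<nu>" using card_mono[OF comps(1)[folded \<Omega>_def] Shc] comps(2) \<Omega>_def by simp
  have neSh: "Sh \<noteq> {}" using ne by (simp add: Sh_def U_def)
  obtain e where e: "e ` {1..\<nu>} = Sh" using enum_onto[OF fSh neSh cSh] by blast
  have Shg: "\<exists>g. lipK p K B g \<and> (\<forall>u\<in>B. u + g u \<in> V \<and> infnorm (g u - (x - projp p x)) < H) \<and> S = graph B g"
    if "S \<in> Sh" for S
    using that sheet unfolding Sh_def by blast
  define G where "G k = (SOME g. lipK p K B g \<and> (\<forall>u\<in>B. u + g u \<in> V \<and> infnorm (g u - (x - projp p x)) < H) \<and> e k = graph B g)" for k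
  have Gk: "lipK p K B (G k) \<and> (\<forall>u\<in>B. u + G k u \<in> V \<and> infnorm (G k u - (x - projp p x)) < H) \<and> e k = graph B (G k)"
    if k: "k \<in> {1..\<nu>}" for k
  proof -
    have "e k \<in> Sh" using e k by blast
    from Shg[OF this] show ?thesis unfolding G_def by (rule someI_ex)
  qed
  have cover: "V \<inter> U \<subseteq> (\<Union>k\<in>{1..\<nu>}. graph B (G k))"
  proof
    fix y assume y: "y \<in> V \<inter> U"
    then have "connected_component_set (V \<inter> \<Omega>) y \<in> Sh" by (simp add: Sh_def)
    then obtain k where k: "k \<in> {1..\<nu>}" "e k = connected_component_set (V \<inter> \<Omega>) y" using e by force
    have yc: "y \<in> connected_component_set (V \<inter> \<Omega>) y" using y U\<Omega> by (simp add: connected_component_refl_eq subsetD)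
    have ye: "y \<in> e k" unfolding k(2) by (rule yc)
    have "e k = graph B (G k)" using Gk[OF k(1)] by blast
    then show "y \<in> (\<Union>k\<in>{1..\<nu>}. graph B (G k))" using ye k(1) by blast
  qed
  show ?thesis
    using Gk cover unfolding K_def B_def U_def by blast
qed

theorem lemma1p6:
  fixes V :: "nat \<Rightarrow> ((real,'n::{finite,linorder}) vec) set"
    and p \<nu> :: nat and \<eta> :: real and C D :: "((real,'n) vec) set"
  assumes "p \<le> CARD('n)" and "\<eta> > 0"
    and "\<forall>\<iota>. bounded (V \<iota>) \<and> C1_submanifold p (V \<iota>) \<and> eta_bounded p \<eta> (V \<iota>)"
    and "hlim V C" and "hlim (\<lambda>\<iota>. fr (V \<iota>)) D"
    and "\<forall>\<iota> a b. box a b \<noteq> {} \<longrightarrow>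
           finite (components (V \<iota> \<inter> box a b)) \<and> card (components (V \<iota> \<inter> box a b)) \<le> \<nu>"
  shows "\<forall>x \<in> C - D. \<exists>a b f. box a b \<noteq> {} \<and> x \<in> box a b \<and>
           (\<forall>k\<in>{1..\<nu>}. lip_map p (real p * \<eta>) (projp p ` box a b) (f k)) \<and>
           C \<inter> box a b = (\<Union>k\<in>{1..\<nu>}. graph (projp p ` box a b) (f k) \<inter> box a b)"
proof
  fix x assume xCD: "x \<in> C - D"
  have xC: "x \<in> C" and xD: "x \<notin> D" using xCD by auto
  define K where "K = real p * \<eta>"
  have eta: "\<eta> \<ge> 0" using assms(2) by simp
  have K0: "K \<ge> 0" using eta by (simp add: K_def)
  have bdV: "\<And>i. bounded (V i)" and man: "\<And>i. C1_submanifold p (V i)" and eb: "\<And>i. eta_bounded p \<eta> (V i)"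
    using assms(3) by auto
  obtain r0 N0 where r0: "r0 > 0" and N0: "\<And>i. i \<ge> N0 \<Longrightarrow> fr (V i) \<inter> ball x r0 = {}"
    using hlim_frontier[OF assms(5) xD] by blast
  define c where "c = sqrt (real CARD('n))"
  have c0: "c > 0" by (simp add: c_def)
  define r where "r = r0 / (2 * (c + 1))"
  have r: "r > 0" using r0 c0 by (simp add: r_def)
  have cr: "c * r < r0"
  proof -
    have "c * r = r0 * (c / (2 * (c + 1)))" by (simp add: r_def)
    also have "\<dots> < r0 * 1"
      using r0 c0 by (intro mult_strict_left_mono) (auto simp: field_simps)
    finally show ?thesis by simp
  qed
  define Q where "Q = {z. infnorm (z - x) \<le> r}"
  have Qball: "Q \<subseteq> ball x r0"
  proof
    fix z assume "z \<in> Q"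
    then have "infnorm (z - x) \<le> r" by (simp add: Q_def)
    then have "c * infnorm (z - x) \<le> c * r" using c0 by (intro mult_left_mono) auto
    moreover have "norm (z - x) \<le> c * infnorm (z - x)" unfolding c_def by (rule norm_le_sqrt_infnorm)
    ultimately have "norm (z - x) < r0" using cr by linarith
    then show "z \<in> ball x r0" by (simp add: dist_norm norm_minus_commute)
  qed
  have closedQ: "closed Q" unfolding Q_def
    by (intro closed_Collect_le continuous_intros continuous_on_infnorm)
  have cpt: "compact (V i \<inter> {z. infnorm (z - x) \<le> r})" if i: "i \<ge> N0" for i
  proof -
    have "V i \<inter> Q = closure (V i) \<inter> Q"
    proof
      show "V i \<inter> Q \<subseteq> closure (V i) \<inter> Q" using closure_subset by blast
      show "closure (V i) \<inter> Q \<subseteq> V i \<inter> Q"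
      proof
        fix z assume z: "z \<in> closure (V i) \<inter> Q"
        show "z \<in> V i \<inter> Q"
        proof (rule ccontr)
          assume "z \<notin> V i \<inter> Q"
          then have "z \<in> fr (V i)" using z by (simp add: fr_def)
          moreover have "z \<in> ball x r0" using z Qball by blast
          ultimately show False using N0[OF i] by blast
        qed
      qed
    qed
    moreover have "compact (closure (V i) \<inter> Q)"
      using bounded_closure[OF bdV[of i]] closedQ
      by (simp add: compact_eq_bounded_closed bounded_Int closed_Int)
    ultimately show ?thesis by (simp add: Q_def)
  qed
  define w where "w = r / (12 * K + 4)"
  define H where "H = r / 2"
  have w: "w > 0" "w \<le> r" using r K0 by (auto simp: w_def field_simps)
  have H: "H > 0" "H \<le> r" using r by (auto simp: H_def)
  have wH: "6 * K * w < H"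
  proof -
    have "6 * K * w = r * (6 * K / (12 * K + 4))" using K0 by (simp add: w_def)
    also have "\<dots> < r * (1 / 2)" using r K0 by (intro mult_strict_left_mono) (auto simp: field_simps)
    finally show ?thesis by (simp add: H_def)
  qed
  define v where "v = ((\<chi> i. if i \<in> firstp p then w / 2 else H / 3) :: (real,'n) vec)"
  define U where "U = ebox p x (w/2) (H/3)"
  define \<Omega> where "\<Omega> = ebox p x w H"
  define B where "B = bball p (projp p x) w"
  define B' where "B' = bball p (projp p x) (w/2)"
  have w2: "w / 2 > 0" "H / 3 > 0" using w H by auto
  have Ubox: "U = box (x - v) (x + v)" by (simp add: U_def ebox_def v_def)
  have xU: "x \<in> U" using x_in_ebox[OF w2] by (simp add: U_def)
  have projU: "projp p ` U = B'" unfolding U_def B'_def by (rule proj_ebox[OF w2])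
  have x\<Omega>: "x \<in> \<Omega>" using x_in_ebox[OF w(1) H(1)] by (simp add: \<Omega>_def)
  have comps: "finite (components (V i \<inter> \<Omega>)) \<and> card (components (V i \<inter> \<Omega>)) \<le> \<nu>" for i
  proof -
    have "box (x - (\<chi> i. if i \<in> firstp p then w else H)) (x + (\<chi> i. if i \<in> firstp p then w else H)) \<noteq> {}"
      using x\<Omega> by (auto simp: \<Omega>_def ebox_def)
    then show ?thesis using assms(6) by (simp add: \<Omega>_def ebox_def)
  qed
  obtain \<epsilon>0 where \<epsilon>0: "\<epsilon>0 > 0" "ball x \<epsilon>0 \<subseteq> U"
    using open_ebox xU unfolding U_def by (meson open_contains_ball)
  obtain N1 where N1: "\<And>i. i \<ge> N1 \<Longrightarrow> \<exists>a\<in>V i. dist a x < \<epsilon>0"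
    using hlim_approx[OF assms(4) xC \<epsilon>0(1)] by blast
  define N where "N = max N0 N1"
  have neU: "V i \<inter> U \<noteq> {}" if iN: "i \<ge> N" for i
  proof -
    have "i \<ge> N1" using iN by (simp add: N_def)
    then obtain a where "a \<in> V i" "dist a x < \<epsilon>0" using N1 by blast
    then have "a \<in> V i \<inter> U" using \<epsilon>0(2) by (auto simp: dist_commute)
    then show ?thesis by blast
  qed
  have "\<forall>i. \<exists>G. i \<ge> N \<longrightarrow> ((\<forall>k\<in>{1..\<nu>}. lipK p K B (G k) \<and>
                (\<forall>u\<in>B. u + G k u \<in> V i \<and> infnorm (G k u - (x - projp p x)) < H)) \<and>
             V i \<inter> U \<subseteq> (\<Union>k\<in>{1..\<nu>}. graph B (G k)))"
  proof
    fix i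
    show "\<exists>G. i \<ge> N \<longrightarrow> ((\<forall>k\<in>{1..\<nu>}. lipK p K B (G k) \<and>
                (\<forall>u\<in>B. u + G k u \<in> V i \<and> infnorm (G k u - (x - projp p x)) < H)) \<and>
             V i \<inter> U \<subseteq> (\<Union>k\<in>{1..\<nu>}. graph B (G k)))"
    proof (cases "i \<ge> N")
      case True
      have i0: "i \<ge> N0" using True by (simp add: N_def)
      show ?thesis
        using sheets_exist[OF man eb eta cpt[OF i0] w H wH[unfolded K_def]
            comps[of i, unfolded \<Omega>_def, THEN conjunct1] comps[of i, unfolded \<Omega>_def, THEN conjunct2]
            neU[OF True, unfolded U_def]]
        unfolding K_def B_def U_def by blast
    qed simp
  qed
  then obtain Gs where Gs: "\<And>i. i \<ge> N \<Longrightarrow> (\<forall>k\<in>{1..\<nu>}. lipK p K B (Gs i k) \<and>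
                (\<forall>u\<in>B. u + Gs i k u \<in> V i \<and> infnorm (Gs i k u - (x - projp p x)) < H)) \<and>
             V i \<inter> U \<subseteq> (\<Union>k\<in>{1..\<nu>}. graph B (Gs i k))"
    by metis
  have Gslip: "lipK p K B (Gs i k)" if "i \<ge> N" "k \<in> {1..\<nu>}" for i k using Gs that by blast
  have GsV: "u + Gs i k u \<in> V i" if "i \<ge> N" "k \<in> {1..\<nu>}" "u \<in> B" for i k u using Gs that by blast
  have Gsband: "infnorm (Gs i k u - (x - projp p x)) < H" if "i \<ge> N" "k \<in> {1..\<nu>}" "u \<in> B" for i k u
    using Gs that by blast
  have Gscover: "V i \<inter> U \<subseteq> (\<Union>k\<in>{1..\<nu>}. graph B (Gs i k))" if "i \<ge> N" for i using Gs that by blast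
  define cB where "cB = {u. projp p u = u \<and> infnorm (u - projp p x) \<le> w / 2}"
  have cBc: "compact cB"
  proof -
    have "closed cB" unfolding cB_def
      by (intro closed_Collect_conj closed_Collect_eq closed_Collect_le continuous_intros continuous_on_infnorm)
    moreover have "cB \<subseteq> cball (projp p x) (c * (w / 2))"
    proof
      fix u assume u: "u \<in> cB"
      have "norm (u - projp p x) \<le> c * infnorm (u - projp p x)" unfolding c_def by (rule norm_le_sqrt_infnorm)
      also have "\<dots> \<le> c * (w / 2)" using u c0 by (intro mult_left_mono) (auto simp: cB_def)
      finally show "u \<in> cball (projp p x) (c * (w / 2))" by (simp add: dist_norm norm_minus_commute)
    qed
    then have "bounded cB" using bounded_cball bounded_subset by blast
    ultimately show ?thesis by (simp add: compact_eq_bounded_closed)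
  qed
  have B'cB: "B' \<subseteq> cB" by (auto simp: B'_def cB_def bball_def)
  have cBB: "cB \<subseteq> B" using w by (auto simp: B_def cB_def bball_def)
  define S where "S = cB \<times> (real ` {1..\<nu>})"
  have Sc: "compact S" unfolding S_def by (intro compact_Times cBc finite_imp_compact) auto
  define F where "F n (y :: (real,'n) vec \<times> real) = Gs (N + n) (nat \<lfloor>snd y\<rfloor>) (fst y)" for n y
  have Fk: "F n (u, real k) = Gs (N + n) k u" for n u k by (simp add: F_def)
  have Smem: "y \<in> S \<longleftrightarrow> fst y \<in> cB \<and> (\<exists>k\<in>{1..\<nu>}. snd y = real k)" for y
    by (cases y) (auto simp: S_def)
  have bound: "norm (F n y) \<le> norm (x - projp p x) + c * H" if y: "y \<in> S" for n y
  proof -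
    obtain u k where uk: "y = (u, real k)" "u \<in> cB" "k \<in> {1..\<nu>}" using y Smem by (cases y) auto
    have "infnorm (Gs (N + n) k u - (x - projp p x)) < H" using Gsband uk cBB by auto
    then have "c * infnorm (Gs (N + n) k u - (x - projp p x)) \<le> c * H" using c0 by simp
    moreover have "norm (Gs (N + n) k u - (x - projp p x)) \<le> c * infnorm (Gs (N + n) k u - (x - projp p x))"
      unfolding c_def by (rule norm_le_sqrt_infnorm)
    moreover have "norm (Gs (N + n) k u) \<le> norm (x - projp p x) + norm (Gs (N + n) k u - (x - projp p x))"
      by (metis add.commute diff_add_cancel norm_triangle_ineq)
    ultimately show ?thesis using uk Fk by simp
  qed
  have equi: "\<exists>d. 0 < d \<and> (\<forall>n y'. y' \<in> S \<and> norm (y - y') < d \<longrightarrow> norm (F n y - F n y') < e)"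
    if y: "y \<in> S" and e: "0 < e" for y e
  proof -
    define d where "d = min (1/2) (e / (c * K + 1))"
    have cK: "c * K \<ge> 0" using c0 K0 by simp
    have d: "d > 0" using e cK by (simp add: d_def)
    have "norm (F n y - F n y') < e" if y': "y' \<in> S" and dy: "norm (y - y') < d" for n y'
    proof -
      obtain u k where uk: "y = (u, real k)" "u \<in> cB" "k \<in> {1..\<nu>}" using y Smem by (cases y) auto
      obtain u' k' where uk': "y' = (u', real k')" "u' \<in> cB" "k' \<in> {1..\<nu>}" using y' Smem by (cases y') auto
      have "\<bar>real k - real k'\<bar> \<le> norm (y - y')"
        using norm_snd_le[of "real k - real k'" "u - u'"] uk uk' by simp
      then have "\<bar>real k - real k'\<bar> < 1/2" using dy by (simp add: d_def)
      then have kk: "k = k'" by linarith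
      have nu: "norm (u - u') \<le> norm (y - y')"
        using norm_fst_le[of "u - u'" "real k - real k'"] uk uk' by simp
      have "norm (F n y - F n y') = norm (Gs (N + n) k u - Gs (N + n) k u')" using uk uk' kk Fk by simp
      also have "\<dots> \<le> c * infnorm (Gs (N + n) k u - Gs (N + n) k u')" unfolding c_def by (rule norm_le_sqrt_infnorm)
      also have "\<dots> \<le> c * (K * infnorm (u - u'))"
        using lipK_le[OF Gslip[of "N + n" k] ] uk uk' cBB c0 by (intro mult_left_mono) auto
      also have "\<dots> \<le> c * (K * norm (y - y'))"
        using c0 K0 infnorm_le_norm[of "u - u'"] nu by (intro mult_left_mono) auto
      also have "\<dots> \<le> c * K * d" using dy c0 K0 by (simp add: mult.assoc mult_left_mono)
      also have "\<dots> \<le> c * K * (e / (c * K + 1))" using cK by (intro mult_left_mono) (auto simp: d_def)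
      also have "\<dots> < e"
      proof -
        have "c * K * (e / (c * K + 1)) = e * (c * K / (c * K + 1))" by simp
        also have "\<dots> < e * 1" using e cK by (intro mult_strict_left_mono) auto
        finally show ?thesis by simp
      qed
      finally show ?thesis .
    qed
    then show ?thesis using d by blast
  qed
  obtain gl kk where gl: "continuous_on S gl" "strict_mono (kk :: nat \<Rightarrow> nat)"
      "\<And>e. 0 < e \<Longrightarrow> \<exists>N'. \<forall>n y. n \<ge> N' \<and> y \<in> S \<longrightarrow> norm (F (kk n) y - gl y) < e"
    using Arzela_Ascoli[OF Sc bound equi] by metis
  define f where "f k u = gl (u, real k)" for k u
  have conv: "(\<lambda>n. Gs (N + kk n) k u) \<longlonglongrightarrow> f k u" if k: "k \<in> {1..\<nu>}" and u: "u \<in> cB" for k u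
  proof (rule LIMSEQ_I)
    fix e :: real assume "e > 0"
    then obtain N' where N': "\<And>n y. n \<ge> N' \<Longrightarrow> y \<in> S \<Longrightarrow> norm (F (kk n) y - gl y) < e" using gl(3) by blast
    have "(u, real k) \<in> S" using k u by (simp add: S_def)
    then have "\<forall>n\<ge>N'. norm (Gs (N + kk n) k u - f k u) < e"
      using N' Fk unfolding f_def by metis
    then show "\<exists>no. \<forall>n\<ge>no. norm (Gs (N + kk n) k u - f k u) < e" by blast
  qed
  have smN: "strict_mono (\<lambda>n. N + kk n)" using gl(2) by (simp add: strict_mono_def)
  have Nkk: "N + kk n \<ge> N" for n by simp
  show "\<exists>a b f. box a b \<noteq> {} \<and> x \<in> box a b \<and>
           (\<forall>k\<in>{1..\<nu>}. lip_map p (real p * \<eta>) (projp p ` box a b) (f k)) \<and>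
           C \<inter> box a b = (\<Union>k\<in>{1..\<nu>}. graph (projp p ` box a b) (f k) \<inter> box a b)"
  proof (intro exI conjI)
    show "box (x - v) (x + v) \<noteq> {}" using xU Ubox by blast
    show "x \<in> box (x - v) (x + v)" using xU Ubox by blast
    show "\<forall>k\<in>{1..\<nu>}. lip_map p (real p * \<eta>) (projp p ` box (x - v) (x + v)) (f k)"
    proof
      fix k assume k: "k \<in> {1..\<nu>}"
      have p0: "projp p (f k u) = 0" if u: "u \<in> B'" for u
      proof -
        have uc: "u \<in> cB" using u B'cB by blast
        have "(\<lambda>n. projp p (Gs (N + kk n) k u)) \<longlonglongrightarrow> projp p (f k u)"
          by (rule bounded_linear.tendsto[OF bounded_linear_projp conv[OF k uc]])
        moreover have "projp p (Gs (N + kk n) k u) = 0" for n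
          using lipK_proj0[OF Gslip[OF Nkk k]] uc cBB by blast
        ultimately have "(\<lambda>n. 0::(real,'n) vec) \<longlonglongrightarrow> projp p (f k u)" by simp
        then show ?thesis by (simp add: LIMSEQ_const_iff)
      qed
      have lp: "infnorm (f k u - f k u') \<le> K * infnorm (u - u')" if u: "u \<in> B'" and u': "u' \<in> B'" for u u'
      proof -
        have uc: "u \<in> cB" "u' \<in> cB" using u u' B'cB by auto
        have "(\<lambda>n. infnorm (Gs (N + kk n) k u - Gs (N + kk n) k u')) \<longlonglongrightarrow> infnorm (f k u - f k u')"
          by (intro tendsto_intros conv[OF k] uc)
        moreover have "infnorm (Gs (N + kk n) k u - Gs (N + kk n) k u') \<le> K * infnorm (u - u')" for n
          using lipK_le[OF Gslip[OF Nkk k]] uc cBB by blast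
        ultimately show ?thesis by (intro LIMSEQ_le_const2) auto
      qed
      show "lip_map p (real p * \<eta>) (projp p ` box (x - v) (x + v)) (f k)"
        unfolding lip_map_def maxnorm_infnorm Ubox[symmetric] projU
        using p0 lp projp_zero_nth K_def by metis
    qed
    show "C \<inter> box (x - v) (x + v) = (\<Union>k\<in>{1..\<nu>}. graph (projp p ` box (x - v) (x + v)) (f k) \<inter> box (x - v) (x + v))"
      unfolding Ubox[symmetric] projU
    proof
      show "(\<Union>k\<in>{1..\<nu>}. graph B' (f k) \<inter> U) \<subseteq> C \<inter> U"
      proof
        fix z assume "z \<in> (\<Union>k\<in>{1..\<nu>}. graph B' (f k) \<inter> U)"
        then obtain k u where k: "k \<in> {1..\<nu>}" and u: "u \<in> B'" and z: "z = u + f k u" "z \<in> U"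
          unfolding graph_def by blast
        define zn where "zn n = u + Gs (N + kk n) k u" for n
        have "zn n \<in> V (N + kk n)" for n using GsV[OF Nkk k] u B'cB cBB by (auto simp: zn_def)
        moreover have "zn \<longlonglongrightarrow> z" unfolding zn_def z(1)
          using u B'cB by (intro tendsto_intros conv[OF k]) auto
        ultimately have "z \<in> C" by (rule hlim_limit[OF assms(4) smN])
        then show "z \<in> C \<inter> U" using z by blast
      qed
      show "C \<inter> U \<subseteq> (\<Union>k\<in>{1..\<nu>}. graph B' (f k) \<inter> U)"
      proof
        fix z assume zCU: "z \<in> C \<inter> U"
        show "z \<in> (\<Union>k\<in>{1..\<nu>}. graph B' (f k) \<inter> U)"
        proof (rule ccontr)
          assume nz: "z \<notin> (\<Union>k\<in>{1..\<nu>}. graph B' (f k) \<inter> U)"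
          define u where "u = projp p z"
          have uB': "u \<in> B'" using zCU projU by (auto simp: u_def)
          have uc: "u \<in> cB" using uB' B'cB by blast
          have pos: "infnorm ((z - u) - f k u) > 0" if k: "k \<in> {1..\<nu>}" for k
          proof (rule ccontr)
            assume "\<not> infnorm ((z - u) - f k u) > 0"
            then have "infnorm ((z - u) - f k u) = 0" using infnorm_pos_le[of "(z - u) - f k u"] by linarith
            then have "(z - u) - f k u = 0" by (simp add: infnorm_eq_0)
            then have "z = u + f k u" by (simp add: algebra_simps)
            then have "z \<in> graph B' (f k) \<inter> U" using uB' zCU unfolding graph_def by blast
            then show False using nz k by blast
          qed
          obtain a0 where "a0 \<in> V N \<inter> U" using neU[of N] by blast
          then obtain k0 where k0: "k0 \<in> {1..\<nu>}" using Gscover[of N] by blast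
          have fin: "finite ((\<lambda>k. infnorm ((z - u) - f k u)) ` {1..\<nu>})" by simp
          have nemp: "(\<lambda>k. infnorm ((z - u) - f k u)) ` {1..\<nu>} \<noteq> {}" using k0 by blast
          define dm where "dm = Min ((\<lambda>k. infnorm ((z - u) - f k u)) ` {1..\<nu>})"
          have dm0: "dm > 0" unfolding dm_def using Min_gr_iff[OF fin nemp] pos by blast
          have dmle: "dm \<le> infnorm ((z - u) - f k u)" if "k \<in> {1..\<nu>}" for k
            unfolding dm_def using fin that by (intro Min_le) auto
          obtain \<epsilon>1 where \<epsilon>1: "\<epsilon>1 > 0" "ball z \<epsilon>1 \<subseteq> U"
            using zCU open_ebox unfolding U_def by (meson IntD2 open_contains_ball)
          define \<epsilon> where "\<epsilon> = min \<epsilon>1 (dm / (3 * (K + 1)))"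
          have \<epsilon>: "\<epsilon> > 0" using \<epsilon>1 dm0 K0 by (simp add: \<epsilon>_def)
          have K\<epsilon>: "(1 + K) * \<epsilon> \<le> dm / 3"
          proof -
            have "\<epsilon> \<le> dm / (3 * (K + 1))" by (simp add: \<epsilon>_def)
            then have "(1 + K) * \<epsilon> \<le> (1 + K) * (dm / (3 * (K + 1)))" using K0 by (intro mult_left_mono) auto
            also have "\<dots> = dm / 3" using K0 by (simp add: field_simps)
            finally show ?thesis .
          qed
          obtain N2 where N2: "\<And>n y. n \<ge> N2 \<Longrightarrow> y \<in> S \<Longrightarrow> norm (F (kk n) y - gl y) < dm / 3"
            using gl(3)[of "dm / 3"] dm0 by auto
          obtain N3 where N3: "\<And>i. i \<ge> N3 \<Longrightarrow> \<exists>a\<in>V i. dist a z < \<epsilon>"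
            using hlim_approx[OF assms(4) _ \<epsilon>] zCU by blast
          define n where "n = N2 + N3"
          define i where "i = N + kk n"
          have iN: "i \<ge> N" by (simp add: i_def)
          have "kk n \<ge> n" using seq_suble[OF gl(2)] by blast
          then have "i \<ge> N3" by (simp add: i_def n_def)
          then obtain a where a: "a \<in> V i" "dist a z < \<epsilon>" using N3 by blast
          have aU: "a \<in> U" using a(2) \<epsilon>1(2) by (auto simp: \<epsilon>_def dist_commute)
          then obtain k vv where k: "k \<in> {1..\<nu>}" and vv: "vv \<in> B" "a = vv + Gs i k vv"
            using Gscover[OF iN] a(1) unfolding graph_def by blast
          have pa: "projp p a = vv"
            using graph_proj[OF Gslip[OF iN k] vv(1)] vv(1) vv(2) by (simp add: B_def bball_def)
          have vvc: "vv \<in> cB" using aU projU pa B'cB by blast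
          have az: "infnorm (a - z) < \<epsilon>"
            using infnorm_le_norm[of "a - z"] a(2) by (simp add: dist_norm)
          have t1: "infnorm ((z - u) - (a - vv)) < \<epsilon>"
          proof -
            have "(z - u) - (a - vv) = (z - a) - projp p (z - a)" by (simp add: u_def pa[symmetric] projp_diff)
            then have "infnorm ((z - u) - (a - vv)) \<le> infnorm (z - a)" using infnorm_fib_le by metis
            then show ?thesis using az infnorm_sub[of a z] by linarith
          qed
          have t2: "infnorm (Gs i k vv - Gs i k u) \<le> K * \<epsilon>"
          proof -
            have "infnorm (Gs i k vv - Gs i k u) \<le> K * infnorm (vv - u)"
              using lipK_le[OF Gslip[OF iN k]] vvc uc cBB by blast
            moreover have "infnorm (vv - u) \<le> infnorm (a - z)"
              using infnorm_projp_le[of p "a - z"] by (simp add: pa u_def projp_diff)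
            ultimately show ?thesis using az K0 by (smt (verit) mult_left_mono)
          qed
          have t3: "infnorm (Gs i k u - f k u) < dm / 3"
          proof -
            have "(u, real k) \<in> S" using uc k by (simp add: S_def)
            then have "norm (F (kk n) (u, real k) - gl (u, real k)) < dm / 3" using N2 by (simp add: n_def)
            then show ?thesis using infnorm_le_norm Fk by (smt (verit) f_def i_def)
          qed
          define X where "X = (z - u) - (a - vv)"
          define Y where "Y = Gs i k vv - Gs i k u"
          define Z where "Z = Gs i k u - f k u"
          have eq: "(z - u) - f k u = X + Y + Z"
            using vv(2) by (simp add: X_def Y_def Z_def algebra_simps)
          have A1: "infnorm (X + Y + Z) \<le> infnorm (X + Y) + infnorm Z" by (rule infnorm_triangle)
          have A2: "infnorm (X + Y) \<le> infnorm X + infnorm Y" by (rule infnorm_triangle)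
          have A3: "(1 + K) * \<epsilon> = \<epsilon> + K * \<epsilon>" by (simp add: algebra_simps)
          have "infnorm ((z - u) - f k u) < dm" unfolding eq
            using A1 A2 A3 t1 t2 t3 K\<epsilon> dm0 unfolding X_def Y_def Z_def by linarith
          then show False using dmle[OF k] by linarith
        qed
      qed
    qed
  qed
qed

end
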